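(* Let $f_1,f_2:\mathbb R^d\to\mathbb R$ be convex with $\nabla f_i$ globally Lipschitz continuous with modulus $L_i>0$ ($i=1,2$), let $f_3:\mathbb R^d\to\mathbb R\cup\{+\infty\}$ be proper and lower semicontinuous, and assume $\varphi:=f_1+f_2+f_3$ has a nonempty set of minimizers. Let $\lambda\in(0,2)$, $\underline\alpha:=\frac{2\lambda-3+\sqrt{9-4\lambda}}{2}$, $\alpha\in(\underline\alpha,1)$, and let $\gamma\in\Gamma$ with $\gamma\le\min\{\frac{\alpha}{L_1},\frac{1-\alpha}{L_2}\}$. Let $((x_1^k,x_2^k,x_3^k),(z_1^k,z_2^k))_k$ be any sequence generated by the relaxed Ryu splitting method. Then: (i) $x_i^{k+1}-x_i^k\to0$ for $i=1,2,3$, and $z_i^{k+1}-z_i^k\to0$ and $x_3^k-x_i^k\to0$ for $i=1,2$. If, in addition, $((x_1^k,x_2^k,x_3^k),(z_1^k,z_2^k))_k$ is bounded, then: (ii) for any cluster point $x^*$ of $(x_3^k)_k$, $\varphi_\gamma^{\mathrm{Ryu}}(z_1^k,z_2^k)\to\varphi(x^* )$ and $f_1(x_1^k)+f_2(x_2^k)+f_3(x_3^k)\to\varphi(x^* )$; (iii) the sets of cluster points of $(x_1^k)_k$, $(x_2^k)_k$, $(x_3^k)_k$ coincide, and every such cluster point $x^*$ is a critical point of $\varphi$, i.e. $0\in\nabla f_1(x^* )+\nabla f_2(x^* )+\partial f_3(x^* )$.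
   Context: For $h:\mathbb R^d\to\mathbb R\cup\{+\infty\}$ and $\gamma>0$, $\mathrm{prox}_{\gamma h}(z):=\operatorname{argmin}_{y}\{h(y)+\frac{1}{2\gamma}\|y-z\|^2\}$; $\partial f_3$ is the limiting subdifferential. The relaxed Ryu splitting method: given $z_1^0,z_2^0\in\mathbb R^d$, for $k\ge0$, $x_1^k=\mathrm{prox}_{\gamma f_1}(z_1^k)$, $x_2^k=\mathrm{prox}_{\frac{\gamma}{\alpha}f_2}(\frac{z_2^k}{\alpha}+x_1^k)$, $x_3^k\in\mathrm{prox}_{\gamma f_3}(x_1^k-z_1^k+x_2^k-z_2^k)$, $z_1^{k+1}=z_1^k+\lambda(x_3^k-x_1^k)$, $z_2^{k+1}=z_2^k+\lambda(x_3^k-x_2^k)$. Relaxed Ryu envelope: with $\gamma_1=\gamma/\alpha$, $\gamma_2=\gamma/(1-\alpha)$, and for $(z_1,z_2)$, $x_1=\mathrm{prox}_{\gamma f_1}(z_1)$, $x_2=\mathrm{prox}_{\frac{\gamma}{\alpha}f_2}(\frac{z_2}{\alpha}+x_1)$, $\varphi_\gamma^{\mathrm{Ryu}}(z_1,z_2):=\min_{y}\{f_3(y)+\sum_{i=1}^2[f_i(x_i)+\langle y-x_i,\nabla f_i(x_i)\rangle+\frac{1}{2\gamma_i}\|y-x_i\|^2]\}$. Stepsize set: fix $\epsilon_1\in\big(\frac{\alpha}{2\alpha-\lambda},\frac{2-\lambda}{1-\alpha}\big)$ and $\epsilon_2\in\big(\frac{\alpha L_2}{\lambda},+\infty\big)$,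 and set $\bar\gamma_0:=\frac{\lambda}{2L_1}$, $\bar\gamma_1:=\frac{\lambda}{2L_2}-\frac{\alpha}{2\epsilon_2}$, $\bar\gamma_2:=\frac{\alpha(2-\lambda-(1-\alpha)\epsilon_1)}{\alpha\epsilon_2+2(1-\alpha)L_1}$, $\bar\gamma_3:=\frac{(1-\alpha)(\epsilon_1(2\alpha-\lambda)-\alpha)}{2\alpha L_2\epsilon_1}$, and $\Gamma:=(0,\min\{\bar\gamma_0,\bar\gamma_1\}]\cap\big(0,\min\{\bar\gamma_2,\bar\gamma_3,\frac{1}{L_1+L_2}\}\big)$. *)

theory Defs
  imports "HOL-Analysis.Analysis"
begin

definition prox_set :: "('a::euclidean_space \<Rightarrow> ereal) \<Rightarrow> real \<Rightarrow> 'a \<Rightarrow> 'a set" where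
  "prox_set h \<gamma> z = {y. \<forall>w. h y + ereal ((norm (y - z))\<^sup>2 / (2 * \<gamma>))
                           \<le> h w + ereal ((norm (w - z))\<^sup>2 / (2 * \<gamma>))}"

(* single-valued prox point (used where prox is unique, e.g. convex smooth f) *)
definition prox_pt :: "('a::euclidean_space \<Rightarrow> ereal) \<Rightarrow> real \<Rightarrow> 'a \<Rightarrow> 'a" where
  "prox_pt h \<gamma> z = (SOME y. y \<in> prox_set h \<gamma> z)"

definition proper_fun :: "('a \<Rightarrow> ereal) \<Rightarrow> bool" where
  "proper_fun f \<longleftrightarrow> (\<forall>x. f x \<noteq> -\<infinity>) \<and> (\<exists>x. f x \<noteq> \<infinity>)"

definition lsc_fun :: "('a::topological_space \<Rightarrow> ereal) \<Rightarrow> bool" where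
  "lsc_fun f \<longleftrightarrow> (\<forall>x. f x \<le> Liminf (at x) f)"

definition frechet_subdiff :: "('a::euclidean_space \<Rightarrow> ereal) \<Rightarrow> 'a \<Rightarrow> 'a set" where
  "frechet_subdiff f x = {v. \<bar>f x\<bar> \<noteq> \<infinity> \<and>
     0 \<le> Liminf (at x) (\<lambda>y. (f y - f x - ereal (v \<bullet> (y - x))) * ereal (1 / norm (y - x)))}"

definition limiting_subdiff :: "('a::euclidean_space \<Rightarrow> ereal) \<Rightarrow> 'a \<Rightarrow> 'a set" where
  "limiting_subdiff f x = {v. \<exists>xs vs. xs \<longlonglongrightarrow> x \<and> (\<lambda>k. f (xs k)) \<longlonglongrightarrow> f x
       \<and> vs \<longlonglongrightarrow> v \<and> (\<forall>k. vs k \<in> frechet_subdiff f (xs k))}"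

definition cluster_pts :: "(nat \<Rightarrow> 'a::topological_space) \<Rightarrow> 'a set" where
  "cluster_pts s = {p. \<exists>r. strict_mono r \<and> (s \<circ> r) \<longlonglongrightarrow> p}"

definition ryu_env ::
  "('a::euclidean_space \<Rightarrow> real) \<Rightarrow> ('a \<Rightarrow> 'a) \<Rightarrow> ('a \<Rightarrow> real) \<Rightarrow> ('a \<Rightarrow> 'a)
   \<Rightarrow> ('a \<Rightarrow> ereal) \<Rightarrow> real \<Rightarrow> real \<Rightarrow> 'a \<Rightarrow> 'a \<Rightarrow> ereal" where
  "ryu_env f1 g1 f2 g2 f3 \<gamma> \<alpha> z1 z2 =
    (let \<gamma>1 = \<gamma> / \<alpha>; \<gamma>2 = \<gamma> / (1 - \<alpha>);
         x1 = prox_pt (\<lambda>x. ereal (f1 x)) \<gamma> z1;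
         x2 = prox_pt (\<lambda>x. ereal (f2 x)) (\<gamma> / \<alpha>) (z2 /\<^sub>R \<alpha> + x1)
     in INF y. f3 y + ereal (f1 x1 + (y - x1) \<bullet> g1 x1 + (norm (y - x1))\<^sup>2 / (2 * \<gamma>1)
                            + f2 x2 + (y - x2) \<bullet> g2 x2 + (norm (y - x2))\<^sup>2 / (2 * \<gamma>2)))"

definition stepsize_set :: "real \<Rightarrow> real \<Rightarrow> real \<Rightarrow> real \<Rightarrow> real \<Rightarrow> real \<Rightarrow> real set" where
  "stepsize_set L1 L2 \<alpha> lam \<epsilon>1 \<epsilon>2 =
    (let g0 = lam / (2 * L1);
         g1 = lam / (2 * L2) - \<alpha> / (2 * \<epsilon>2);
         g2 = \<alpha> * (2 - lam - (1 - \<alpha>) * \<epsilon>1) / (\<alpha> * \<epsilon>2 + 2 * (1 - \<alpha>) * L1);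
         g3 = (1 - \<alpha>) * (\<epsilon>1 * (2 * \<alpha> - lam) - \<alpha>) / (2 * \<alpha> * L2 * \<epsilon>1)
     in {\<gamma>. 0 < \<gamma> \<and> \<gamma> \<le> min g0 g1 \<and> \<gamma> < min (min g2 g3) (1 / (L1 + L2))})"

end

theory Submission
  imports Defs
begin

lemma deriv_line:
  fixes f :: "'a::real_inner \<Rightarrow> real"
  assumes "\<And>x. (f has_derivative (\<lambda>h. g x \<bullet> h)) (at x)"
  shows "((\<lambda>t. f (x + t *\<^sub>R d)) has_real_derivative (g (x + t *\<^sub>R d) \<bullet> d)) (at t)"
proof -
  have "((\<lambda>r. x + r *\<^sub>R d) has_derivative (\<lambda>r. r *\<^sub>R d)) (at t)"
    by (intro derivative_eq_intros) auto
  then have "((\<lambda>r. f (x + r *\<^sub>R d)) has_derivative (\<lambda>k. g (x + t *\<^sub>R d) \<bullet> (k *\<^sub>R d))) (at t)"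
    by (rule has_derivative_compose, simp add: assms)
  moreover have "(\<lambda>k. g (x + t *\<^sub>R d) \<bullet> (k *\<^sub>R d)) = (*) (g (x + t *\<^sub>R d) \<bullet> d)"
    by (auto simp: fun_eq_iff)
  ultimately show ?thesis
    unfolding has_field_derivative_def by simp
qed

lemma descent:
  fixes f :: "'a::real_inner \<Rightarrow> real"
  assumes D: "\<And>x. (f has_derivative (\<lambda>h. g x \<bullet> h)) (at x)" and Lip: "L-lipschitz_on UNIV g"
  shows "f y \<le> f x + g x \<bullet> (y - x) + L/2 * (norm (y-x))^2"
proof -
  define d where "d = y - x"
  define h where "h t = f (x + t *\<^sub>R d) - t * (g x \<bullet> d) - L/2 * t^2 * (norm d)^2" for t
  have "h 1 \<le> h 0"
  proof (rule DERIV_nonpos_imp_nonincreasing[of 0 1 h])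
    fix t :: real assume t: "0 \<le> t" "t \<le> 1"
    have "(h has_real_derivative (g (x + t *\<^sub>R d) \<bullet> d - g x \<bullet> d - L/2 * (2 * t) * (norm d)^2)) (at t)"
    proof -
      have a: "((\<lambda>t. f (x + t *\<^sub>R d)) has_real_derivative (g (x + t *\<^sub>R d) \<bullet> d)) (at t)"
        by (rule deriv_line[OF D])
      have b: "((\<lambda>t. t * (g x \<bullet> d) + L/2 * t^2 * (norm d)^2) has_real_derivative (g x \<bullet> d + L/2 * (2 * t) * (norm d)^2)) (at t)"
        by (auto intro!: derivative_eq_intros)
      have "((\<lambda>t. f (x + t *\<^sub>R d) - (t * (g x \<bullet> d) + L/2 * t^2 * (norm d)^2)) has_real_derivative (g (x + t *\<^sub>R d) \<bullet> d - (g x \<bullet> d + L/2 * (2 * t) * (norm d)^2))) (at t)"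
        by (rule DERIV_diff[OF a b])
      then show ?thesis unfolding h_def by (simp add: algebra_simps)
    qed
    moreover have "g (x + t *\<^sub>R d) \<bullet> d - g x \<bullet> d - L/2 * (2 * t) * (norm d)^2 \<le> 0"
    proof -
      have "g (x + t *\<^sub>R d) \<bullet> d - g x \<bullet> d = (g (x + t *\<^sub>R d) - g x) \<bullet> d" by (simp add: inner_diff_left)
      also have "\<dots> \<le> norm (g (x + t *\<^sub>R d) - g x) * norm d" by (rule norm_cauchy_schwarz)
      also have "\<dots> \<le> (L * norm (t *\<^sub>R d)) * norm d"
        using lipschitz_on_normD[OF Lip, of "x + t *\<^sub>R d" x]
        by (intro mult_right_mono) auto
      also have "\<dots> = L/2 * (2 * t) * (norm d)^2" using t by (simp add: power2_eq_square)
      finally show ?thesis by simp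
    qed
    ultimately show "\<exists>y. (h has_real_derivative y) (at t) \<and> y \<le> 0" by blast
  qed simp
  then show ?thesis unfolding h_def d_def by (simp add: inner_commute)
qed


lemma tangent:
  fixes f :: "'a::real_inner \<Rightarrow> real"
  assumes C: "convex_on UNIV f" and D: "\<And>x. (f has_derivative (\<lambda>h. g x \<bullet> h)) (at x)"
  shows "f x + g x \<bullet> (y - x) \<le> f y"
proof -
  define d where "d = y - x"
  define h where "h t = f (x + t *\<^sub>R d)" for t
  have hc: "convex_on UNIV h"
  proof (rule convex_onI)
    fix u s t :: real assume u: "0 < u" "u < 1"
    have "x + ((1 - u) * s + u * t) *\<^sub>R d = (1 - u) *\<^sub>R (x + s *\<^sub>R d) + u *\<^sub>R (x + t *\<^sub>R d)"
      by (simp add: algebra_simps)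
    then show "h ((1 - u) *\<^sub>R s + u *\<^sub>R t) \<le> (1 - u) * h s + u * h t"
      unfolding h_def using convex_onD[OF C, of u "x + s *\<^sub>R d" "x + t *\<^sub>R d"] u by simp
  qed simp
  have "(h has_real_derivative (g (x + 0 *\<^sub>R d) \<bullet> d)) (at 0 within UNIV)"
    unfolding h_def by (rule deriv_line[OF D])
  from convex_on_imp_above_tangent[OF hc _ _ _ this, of 1]
  have "h 1 - h 0 \<ge> g x \<bullet> d" by simp
  then show ?thesis unfolding h_def d_def by simp
qed

lemma monotone_grad:
  fixes f :: "'a::real_inner \<Rightarrow> real"
  assumes C: "convex_on UNIV f" and D: "\<And>x. (f has_derivative (\<lambda>h. g x \<bullet> h)) (at x)"
  shows "0 \<le> (g x - g y) \<bullet> (x - y)"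
  using tangent[OF C D, of x y] tangent[OF C D, of y x]
  by (simp add: inner_diff_left inner_diff_right inner_commute)

lemma cocoercive:
  fixes f :: "'a::real_inner \<Rightarrow> real"
  assumes C: "convex_on UNIV f" and D: "\<And>x. (f has_derivative (\<lambda>h. g x \<bullet> h)) (at x)"
    and Lip: "L-lipschitz_on UNIV g" and L: "L > 0"
  shows "f y + g y \<bullet> (x - y) + (norm (g x - g y))^2 / (2 * L) \<le> f x"
proof -
  define \<phi> where "\<phi> w = f w - g y \<bullet> w" for w
  have D\<phi>: "(\<phi> has_derivative (\<lambda>h. (g w - g y) \<bullet> h)) (at w)" for w
    unfolding \<phi>_def
    by (rule has_derivative_eq_rhs, (rule derivative_eq_intros D)+) (auto simp: inner_diff_left fun_eq_iff)
  have L\<phi>: "L-lipschitz_on UNIV (\<lambda>w. g w - g y)"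
    using Lip by (auto simp: lipschitz_on_def dist_norm)
  have "\<phi> y \<le> \<phi> w" for w
    using tangent[OF C D, of y w] unfolding \<phi>_def by (simp add: inner_diff_right)
  also have "\<phi> (x - (1/L) *\<^sub>R (g x - g y)) \<le> \<phi> x + (g x - g y) \<bullet> ((x - (1/L) *\<^sub>R (g x - g y)) - x) + L/2 * (norm ((x - (1/L) *\<^sub>R (g x - g y)) - x))^2"
    by (rule descent[OF D\<phi> L\<phi>])
  also have "\<dots> = \<phi> x - (norm (g x - g y))^2 / (2 * L)"
  proof -
    have "(x - (1/L) *\<^sub>R (g x - g y)) - x = - ((1/L) *\<^sub>R (g x - g y))" by simp
    moreover have "(g x - g y) \<bullet> (- ((1/L) *\<^sub>R (g x - g y))) = -((norm (g x - g y))^2) / L"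
      by (simp add: power2_norm_eq_inner)
    moreover have "(norm (- ((1/L) *\<^sub>R (g x - g y))))^2 = (norm (g x - g y))^2 / L^2"
      using L by (simp add: power_divide)
    ultimately show ?thesis using L by (simp add: field_simps power2_eq_square)
  qed
  finally show ?thesis unfolding \<phi>_def by (simp add: inner_diff_right)
qed
lemma prox_set_real:
  fixes f :: "'a::euclidean_space \<Rightarrow> real"
  shows "x \<in> prox_set (\<lambda>x. ereal (f x)) t z \<longleftrightarrow> (\<forall>w. f x + (norm (x - z))^2 / (2*t) \<le> f w + (norm (w - z))^2 / (2*t))"
  unfolding prox_set_def by simp

lemma prox_opt:
  fixes f :: "'a::euclidean_space \<Rightarrow> real"
  assumes D: "\<And>x. (f has_derivative (\<lambda>h. g x \<bullet> h)) (at x)"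
    and P: "x \<in> prox_set (\<lambda>x. ereal (f x)) t z" and t: "t > 0"
  shows "z = x + t *\<^sub>R g x"
proof -
  define c where "c = 1 / (2*t)"
  define H where "H w = f w + c * ((w - z) \<bullet> (w - z))" for w
  have min: "H x \<le> H w" for w
    using P unfolding prox_set_real H_def c_def by (simp add: power2_norm_eq_inner)
  have DH: "(H has_derivative (\<lambda>h. g x \<bullet> h + c * (h \<bullet> (x - z) + (x - z) \<bullet> h))) (at x)"
    unfolding H_def
    by (auto intro!: derivative_eq_intros D simp: fun_eq_iff inner_diff_left inner_diff_right)
  have "(\<lambda>h. g x \<bullet> h + c * (h \<bullet> (x - z) + (x - z) \<bullet> h)) = (\<lambda>h. 0)"
    by (rule has_derivative_local_min[OF DH]) (simp add: min)
  then have zero: "g x \<bullet> v + c * (v \<bullet> (x - z) + (x - z) \<bullet> v) = 0" for v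
    by (metis (no_types))
  define w where "w = x + t *\<^sub>R g x - z"
  have e: "g x \<bullet> w + (1/t) * (w \<bullet> (x - z)) = 0"
    using zero[of w] by (simp add: c_def inner_commute)
  have "t * (g x \<bullet> w) + w \<bullet> (x - z) = 0"
  proof -
    have "t * (g x \<bullet> w + (1/t) * (w \<bullet> (x - z))) = 0" using e by simp
    then show ?thesis using t by (simp add: algebra_simps)
  qed
  then have "w \<bullet> (t *\<^sub>R g x + (x - z)) = 0"
    by (simp add: inner_add_right inner_commute)
  moreover have "t *\<^sub>R g x + (x - z) = w" unfolding w_def by simp
  ultimately have "w = 0" by simp
  then show ?thesis unfolding w_def by (simp add: algebra_simps)
qed


lemma key_real:
  fixes lam al g L1 L2 e1 e2 n1 n2 m1 m2 p1 p2 q r s1 t1 s2 t2 dF1 dF2 dD1 dD2 E :: real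
  assumes pos: "0 < lam" "0 < al" "al < 1" "0 < g" "0 < L1" "0 < L2" "0 < e1" "0 < e2"
    and g0: "g \<le> lam / (2 * L1)" and g1: "g \<le> lam / (2 * L2) - al / (2 * e2)"
    and r1: "lam * s1 = p1 + g * m1" and r2: "lam * t1 = n1 + g * p1"
    and r3: "lam * s2 = al * p2 - al * r + g * m2" and r4: "lam * t2 = al * n2 - al * q + g * p2"
    and E: "E = dF1 + s1 - dD1 - p1 + al / (2 * g) * (n1 - 2 * t1) + dF2 + s2 - dD2 - p2 + (1 - al) / (2 * g) * (n2 - 2 * t2)"
    and H1: "dF1 \<le> dD1 + p1 - m1 / (2 * L1)" and H2: "dF2 \<le> dD2 + p2 - m2 / (2 * L2)"
    and H3: "p1 \<le> L1 * n1" and H4: "(2 * al - 1) * p2 \<le> al * L2 * n2"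
    and Y1: "2 * q \<le> e1 * n1 + n2 / e1" and Y2: "- 2 * r \<le> e2 * n1 + m2 / e2"
    and m: "0 \<le> m1" "0 \<le> m2"
  shows "2 * lam * g * E \<le> - (al * (2 - lam) - al * (1 - al) * e1 - al * g * e2 - 2 * (1 - al) * g * L1) * n1
                            - ((1 - al) * (2 * al - lam) - (1 - al) * al / e1 - 2 * al * g * L2) * n2"
proof -
  define E1 where "E1 = s1 + al / (2 * g) * (n1 - 2 * t1) - m1 / (2 * L1) + s2 + (1 - al) / (2 * g) * (n2 - 2 * t2) - m2 / (2 * L2)"
  have "E \<le> E1" unfolding E E1_def using H1 H2 by linarith
  then have a: "2 * lam * g * E \<le> 2 * lam * g * E1" using pos by simp
  have b: "2 * lam * g * E1 = 2 * g * (lam * s1) + al * (lam * n1 - 2 * (lam * t1)) - lam * g * m1 / L1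
      + 2 * g * (lam * s2) + (1 - al) * (lam * n2 - 2 * (lam * t2)) - lam * g * m2 / L2"
    unfolding E1_def using pos by (simp add: field_simps)
  have c: "\<dots> = - al * (2 - lam) * n1 + 2 * g * (1 - al) * p1 + g * (2 * g - lam / L1) * m1
       + 2 * g * ((2 * al - 1) * p2) + (- 2 * r) * (al * g) + g * (2 * g - lam / L2) * m2
       - (1 - al) * (2 * al - lam) * n2 + (al * (1 - al)) * (2 * q)"
    unfolding r1 r2 r3 r4 using pos by (simp add: field_simps)
  have d1: "2 * g * (1 - al) * p1 \<le> 2 * g * (1 - al) * (L1 * n1)"
    using H3 pos by (intro mult_left_mono) auto
  have d2: "g * (2 * g - lam / L1) * m1 \<le> 0"
  proof -
    have "2 * g - lam / L1 \<le> 0" using g0 pos by (simp add: field_simps)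
    then show ?thesis using pos m by (simp add: mult_nonneg_nonpos mult_nonpos_nonneg)
  qed
  have d3: "2 * g * ((2 * al - 1) * p2) \<le> 2 * g * (al * L2 * n2)"
    using H4 pos by (intro mult_left_mono) auto
  have d4: "(- 2 * r) * (al * g) \<le> (e2 * n1 + m2 / e2) * (al * g)"
    using Y2 pos by (intro mult_right_mono) auto
  have d5: "(al * (1 - al)) * (2 * q) \<le> (al * (1 - al)) * (e1 * n1 + n2 / e1)"
    using Y1 pos by (intro mult_left_mono) auto
  have d6: "g * (2 * g - lam / L2) * m2 + (m2 / e2) * (al * g) \<le> 0"
  proof -
    have "g * (2 * g - lam / L2) * m2 + (m2 / e2) * (al * g) = g * m2 * (2 * g - lam / L2 + al / e2)"
      by (simp add: field_simps)
    moreover have "2 * g - lam / L2 + al / e2 \<le> 0" using g1 pos by (simp add: field_simps)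
    ultimately show ?thesis using pos m by (simp add: mult_nonneg_nonpos)
  qed
  have "2 * lam * g * E \<le> - al * (2 - lam) * n1 + 2 * g * (1 - al) * (L1 * n1) 
       + 2 * g * (al * L2 * n2) + (e2 * n1) * (al * g)
       - (1 - al) * (2 * al - lam) * n2 + (al * (1 - al)) * (e1 * n1 + n2 / e1)"
    using a b c d1 d2 d3 d4 d5 d6 by (simp add: algebra_simps)
  also have "\<dots> = - (al * (2 - lam) - al * (1 - al) * e1 - al * g * e2 - 2 * (1 - al) * g * L1) * n1
                            - ((1 - al) * (2 * al - lam) - (1 - al) * al / e1 - 2 * al * g * L2) * n2"
    using pos by (simp add: field_simps)
  finally show ?thesis .
qed

lemma norm_diff_sq: "(norm (a - b))^2 = (norm a)^2 - 2 * (a \<bullet> b) + (norm (b::'a::real_inner))^2"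
  by (simp add: power2_norm_eq_inner inner_diff_left inner_diff_right inner_commute)

lemma key_vec:
  fixes x1 x1' x2 x2' y :: "'a::real_inner" and f1 f2 :: "'a \<Rightarrow> real" and g1 g2 :: "'a \<Rightarrow> 'a"
  assumes C1: "convex_on UNIV f1" and D1: "\<And>x. (f1 has_derivative (\<lambda>h. g1 x \<bullet> h)) (at x)"
    and Lip1: "L1-lipschitz_on UNIV g1"
    and C2: "convex_on UNIV f2" and D2: "\<And>x. (f2 has_derivative (\<lambda>h. g2 x \<bullet> h)) (at x)"
    and Lip2: "L2-lipschitz_on UNIV g2"
    and pos: "0 < lam" "0 < al" "al < 1" "0 < g" "0 < L1" "0 < L2" "0 < e1" "0 < e2"
    and g0: "g \<le> lam / (2 * L1)" and g1c: "g \<le> lam / (2 * L2) - al / (2 * e2)"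
    and z1rel: "lam *\<^sub>R (y - x1) = (x1' - x1) + g *\<^sub>R (g1 x1' - g1 x1)"
    and z2rel: "lam *\<^sub>R (y - x2) = al *\<^sub>R (x2' - x2) - al *\<^sub>R (x1' - x1) + g *\<^sub>R (g2 x2' - g2 x2)"
  shows "2 * lam * g * ((f1 x1' + (y - x1') \<bullet> g1 x1' + (norm (y - x1'))\<^sup>2 / (2 * (g / al))
             + f2 x2' + (y - x2') \<bullet> g2 x2' + (norm (y - x2'))\<^sup>2 / (2 * (g / (1 - al))))
         - (f1 x1 + (y - x1) \<bullet> g1 x1 + (norm (y - x1))\<^sup>2 / (2 * (g / al))
             + f2 x2 + (y - x2) \<bullet> g2 x2 + (norm (y - x2))\<^sup>2 / (2 * (g / (1 - al)))))
     \<le> - (al * (2 - lam) - al * (1 - al) * e1 - al * g * e2 - 2 * (1 - al) * g * L1) * (norm (x1' - x1))\<^sup>2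
        - ((1 - al) * (2 * al - lam) - (1 - al) * al / e1 - 2 * al * g * L2) * (norm (x2' - x2))\<^sup>2"
proof -
  define a1 where "a1 = y - x1"
  define a2 where "a2 = y - x2"
  define d1 where "d1 = x1' - x1"
  define d2 where "d2 = x2' - x2"
  define G1 where "G1 = g1 x1' - g1 x1"
  define G2 where "G2 = g2 x2' - g2 x2"
  have ya1: "y - x1' = a1 - d1" unfolding a1_def d1_def by simp
  have ya2: "y - x2' = a2 - d2" unfolding a2_def d2_def by simp
  have gg1: "g1 x1' = g1 x1 + G1" unfolding G1_def by simp
  have gg2: "g2 x2' = g2 x2 + G2" unfolding G2_def by simp
  have z1: "lam *\<^sub>R a1 = d1 + g *\<^sub>R G1" using z1rel unfolding a1_def d1_def G1_def .
  have z2: "lam *\<^sub>R a2 = al *\<^sub>R d2 - al *\<^sub>R d1 + g *\<^sub>R G2" using z2rel unfolding a2_def d2_def d1_def G2_def .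
  have r1: "lam * (a1 \<bullet> G1) = d1 \<bullet> G1 + g * (norm G1)\<^sup>2"
  proof -
    have "lam * (a1 \<bullet> G1) = (lam *\<^sub>R a1) \<bullet> G1" by simp
    also have "\<dots> = d1 \<bullet> G1 + g * (norm G1)\<^sup>2" unfolding z1 by (simp add: inner_add_left power2_norm_eq_inner)
    finally show ?thesis .
  qed
  have r2: "lam * (a1 \<bullet> d1) = (norm d1)\<^sup>2 + g * (d1 \<bullet> G1)"
  proof -
    have "lam * (a1 \<bullet> d1) = d1 \<bullet> (lam *\<^sub>R a1)" by (simp add: inner_commute)
    also have "\<dots> = (norm d1)\<^sup>2 + g * (d1 \<bullet> G1)" unfolding z1 by (simp add: inner_add_right power2_norm_eq_inner)
    finally show ?thesis .
  qed
  have r3: "lam * (a2 \<bullet> G2) = al * (d2 \<bullet> G2) - al * (d1 \<bullet> G2) + g * (norm G2)\<^sup>2"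
  proof -
    have "lam * (a2 \<bullet> G2) = (lam *\<^sub>R a2) \<bullet> G2" by simp
    also have "\<dots> = al * (d2 \<bullet> G2) - al * (d1 \<bullet> G2) + g * (norm G2)\<^sup>2" unfolding z2
      by (simp add: inner_add_left inner_diff_left power2_norm_eq_inner)
    finally show ?thesis .
  qed
  have r4: "lam * (a2 \<bullet> d2) = al * (norm d2)\<^sup>2 - al * (d1 \<bullet> d2) + g * (d2 \<bullet> G2)"
  proof -
    have "lam * (a2 \<bullet> d2) = d2 \<bullet> (lam *\<^sub>R a2)" by (simp add: inner_commute)
    also have "\<dots> = al * (norm d2)\<^sup>2 - al * (d2 \<bullet> d1) + g * (d2 \<bullet> G2)" unfolding z2
      by (simp add: inner_add_right inner_diff_right power2_norm_eq_inner)
    also have "d2 \<bullet> d1 = d1 \<bullet> d2" by (rule inner_commute)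
    finally show ?thesis .
  qed
  have H1: "f1 x1' - f1 x1 \<le> g1 x1 \<bullet> d1 + d1 \<bullet> G1 - (norm G1)\<^sup>2 / (2 * L1)"
  proof -
    have "f1 x1' + g1 x1' \<bullet> (x1 - x1') + (norm (g1 x1 - g1 x1'))^2 / (2 * L1) \<le> f1 x1"
      by (rule cocoercive[OF C1 D1 Lip1 pos(5)])
    moreover have "norm (g1 x1 - g1 x1') = norm G1" unfolding G1_def by (simp add: norm_minus_commute)
    moreover have "g1 x1' \<bullet> (x1 - x1') = - (g1 x1 \<bullet> d1 + d1 \<bullet> G1)"
      unfolding gg1 d1_def by (simp add: inner_diff_right inner_add_left inner_commute algebra_simps)
    ultimately show ?thesis by simp
  qed
  have H2: "f2 x2' - f2 x2 \<le> g2 x2 \<bullet> d2 + d2 \<bullet> G2 - (norm G2)\<^sup>2 / (2 * L2)"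
  proof -
    have "f2 x2' + g2 x2' \<bullet> (x2 - x2') + (norm (g2 x2 - g2 x2'))^2 / (2 * L2) \<le> f2 x2"
      by (rule cocoercive[OF C2 D2 Lip2 pos(6)])
    moreover have "norm (g2 x2 - g2 x2') = norm G2" unfolding G2_def by (simp add: norm_minus_commute)
    moreover have "g2 x2' \<bullet> (x2 - x2') = - (g2 x2 \<bullet> d2 + d2 \<bullet> G2)"
      unfolding gg2 d2_def by (simp add: inner_diff_right inner_add_left inner_commute algebra_simps)
    ultimately show ?thesis by simp
  qed
  have H3: "d1 \<bullet> G1 \<le> L1 * (norm d1)\<^sup>2"
  proof -
    have "d1 \<bullet> G1 \<le> norm d1 * norm G1" by (rule norm_cauchy_schwarz)
    also have "\<dots> \<le> norm d1 * (L1 * norm d1)"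
      using lipschitz_on_normD[OF Lip1, of x1' x1] unfolding G1_def d1_def
      by (intro mult_left_mono) auto
    finally show ?thesis by (simp add: power2_eq_square algebra_simps)
  qed
  have H4: "(2 * al - 1) * (d2 \<bullet> G2) \<le> al * L2 * (norm d2)\<^sup>2"
  proof -
    have p0: "0 \<le> d2 \<bullet> G2" using monotone_grad[OF C2 D2, of x2' x2] unfolding d2_def G2_def
      by (simp add: inner_commute)
    have "d2 \<bullet> G2 \<le> norm d2 * norm G2" by (rule norm_cauchy_schwarz)
    also have "\<dots> \<le> norm d2 * (L2 * norm d2)"
      using lipschitz_on_normD[OF Lip2, of x2' x2] unfolding G2_def d2_def
      by (intro mult_left_mono) auto
    finally have p1: "d2 \<bullet> G2 \<le> L2 * (norm d2)\<^sup>2" by (simp add: power2_eq_square algebra_simps)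
    show ?thesis
    proof (cases "2 * al - 1 \<ge> 0")
      case True
      then have "(2 * al - 1) * (d2 \<bullet> G2) \<le> (2 * al - 1) * (L2 * (norm d2)\<^sup>2)"
        using p1 by (intro mult_left_mono) auto
      also have "\<dots> \<le> al * (L2 * (norm d2)\<^sup>2)"
        using pos by (intro mult_right_mono) auto
      finally show ?thesis by simp
    next
      case False
      then have "(2 * al - 1) * (d2 \<bullet> G2) \<le> 0" using p0 by (simp add: mult_nonpos_nonneg)
      also have "0 \<le> al * L2 * (norm d2)\<^sup>2" using pos by simp
      finally show ?thesis .
    qed
  qed
  have Y1: "2 * (d1 \<bullet> d2) \<le> e1 * (norm d1)\<^sup>2 + (norm d2)\<^sup>2 / e1"
  proof -
    have "0 \<le> (norm (e1 *\<^sub>R d1 - d2))\<^sup>2" by simp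
    also have "\<dots> = e1 * (e1 * (norm d1)\<^sup>2 + (norm d2)\<^sup>2 / e1 - 2 * (d1 \<bullet> d2))"
      unfolding norm_diff_sq using pos by (simp add: power2_eq_square field_simps)
    finally show ?thesis using pos by (simp add: zero_le_mult_iff)
  qed
  have Y2: "- 2 * (d1 \<bullet> G2) \<le> e2 * (norm d1)\<^sup>2 + (norm G2)\<^sup>2 / e2"
  proof -
    have "0 \<le> (norm (e2 *\<^sub>R d1 - (- G2)))\<^sup>2" by simp
    also have "\<dots> = e2 * (e2 * (norm d1)\<^sup>2 + (norm G2)\<^sup>2 / e2 + 2 * (d1 \<bullet> G2))"
      unfolding norm_diff_sq using pos by (simp add: power2_eq_square field_simps)
    finally show ?thesis using pos by (simp add: zero_le_mult_iff)
  qed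
  have E: "(f1 x1' + (y - x1') \<bullet> g1 x1' + (norm (y - x1'))\<^sup>2 / (2 * (g / al))
             + f2 x2' + (y - x2') \<bullet> g2 x2' + (norm (y - x2'))\<^sup>2 / (2 * (g / (1 - al))))
         - (f1 x1 + (y - x1) \<bullet> g1 x1 + (norm (y - x1))\<^sup>2 / (2 * (g / al))
             + f2 x2 + (y - x2) \<bullet> g2 x2 + (norm (y - x2))\<^sup>2 / (2 * (g / (1 - al))))
     = (f1 x1' - f1 x1) + (a1 \<bullet> G1) - (g1 x1 \<bullet> d1) - (d1 \<bullet> G1) + al / (2 * g) * ((norm d1)\<^sup>2 - 2 * (a1 \<bullet> d1))
       + (f2 x2' - f2 x2) + (a2 \<bullet> G2) - (g2 x2 \<bullet> d2) - (d2 \<bullet> G2) + (1 - al) / (2 * g) * ((norm d2)\<^sup>2 - 2 * (a2 \<bullet> d2))"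
  proof -
    have i1: "(y - x1') \<bullet> g1 x1' - (y - x1) \<bullet> g1 x1 = (a1 \<bullet> G1) - (g1 x1 \<bullet> d1) - (d1 \<bullet> G1)"
      unfolding ya1 gg1 a1_def[symmetric] by (simp add: inner_diff_left inner_diff_right inner_add_left inner_add_right inner_commute)
    have i2: "(y - x2') \<bullet> g2 x2' - (y - x2) \<bullet> g2 x2 = (a2 \<bullet> G2) - (g2 x2 \<bullet> d2) - (d2 \<bullet> G2)"
      unfolding ya2 gg2 a2_def[symmetric] by (simp add: inner_diff_left inner_diff_right inner_add_left inner_add_right inner_commute)
    have i3: "(norm (y - x1'))\<^sup>2 / (2 * (g / al)) - (norm (y - x1))\<^sup>2 / (2 * (g / al)) = al / (2 * g) * ((norm d1)\<^sup>2 - 2 * (a1 \<bullet> d1))"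
      unfolding ya1 a1_def[symmetric] norm_diff_sq using pos by (simp add: field_simps)
    have i4: "(norm (y - x2'))\<^sup>2 / (2 * (g / (1 - al))) - (norm (y - x2))\<^sup>2 / (2 * (g / (1 - al))) = (1 - al) / (2 * g) * ((norm d2)\<^sup>2 - 2 * (a2 \<bullet> d2))"
      unfolding ya2 a2_def[symmetric] norm_diff_sq using pos by (simp add: field_simps)
    show ?thesis using i1 i2 i3 i4 by linarith
  qed
  have m: "0 \<le> (norm G1)\<^sup>2" "0 \<le> (norm G2)\<^sup>2" by simp_all
  show ?thesis unfolding E
    using key_real[OF pos g0 g1c r1 r2 r3 r4 refl H1 H2 H3 H4 Y1 Y2 m] unfolding d1_def d2_def by simp
qed

lemma prox_pt_eq:
  fixes f :: "'a::euclidean_space \<Rightarrow> real"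
  assumes C: "convex_on UNIV f" and Df: "\<And>x. (f has_derivative (\<lambda>h. g x \<bullet> h)) (at x)"
    and P: "x \<in> prox_set (\<lambda>x. ereal (f x)) t z" and t: "t > 0"
  shows "prox_pt (\<lambda>x. ereal (f x)) t z = x"
proof -
  define y where "y = prox_pt (\<lambda>x. ereal (f x)) t z"
  have Py: "y \<in> prox_set (\<lambda>x. ereal (f x)) t z"
    unfolding y_def prox_pt_def using P by (rule someI)
  have ex: "z = x + t *\<^sub>R g x" by (rule prox_opt[OF Df P t])
  have ey: "z = y + t *\<^sub>R g y" by (rule prox_opt[OF Df Py t])
  have m: "0 \<le> (g x - g y) \<bullet> (x - y)" by (rule monotone_grad[OF C Df])
  have "x - y = - t *\<^sub>R (g x - g y)" using ex ey by (simp add: algebra_simps)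
  then have "(x - y) \<bullet> (x - y) = - t * ((g x - g y) \<bullet> (x - y))"
    by (metis inner_scaleR_left)
  with m t have "(x - y) \<bullet> (x - y) \<le> 0" by (simp add: mult_nonneg_nonneg)
  then have "(x - y) \<bullet> (x - y) = 0" using inner_ge_zero[of "x - y"] by linarith
  then have "x = y" by simp
  then show ?thesis unfolding y_def by simp
qed

lemma prox_finite:
  assumes pr: "proper_fun f" and P: "x \<in> prox_set f t u"
  shows "\<bar>f x\<bar> \<noteq> \<infinity>"
proof -
  obtain w where w: "f w \<noteq> \<infinity>" using pr unfolding proper_fun_def by auto
  have "f x + ereal ((norm (x - u))\<^sup>2 / (2 * t)) \<le> f w + ereal ((norm (w - u))\<^sup>2 / (2 * t))"
    using P unfolding prox_set_def by auto
  moreover have "f w + ereal ((norm (w - u))\<^sup>2 / (2 * t)) \<noteq> \<infinity>" using w by simp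
  ultimately have "f x \<noteq> \<infinity>" by auto
  moreover have "f x \<noteq> -\<infinity>" using pr unfolding proper_fun_def by auto
  ultimately show ?thesis by auto
qed

lemma lsc_seq:
  fixes f :: "'a::euclidean_space \<Rightarrow> ereal"
  assumes lsc: "lsc_fun f" and s: "s \<longlonglongrightarrow> x" and c: "c < f x"
  shows "eventually (\<lambda>j. c < f (s j)) sequentially"
proof -
  have "f x \<le> Liminf (at x) f" using lsc unfolding lsc_fun_def by auto
  then have "eventually (\<lambda>w. c < f w) (at x)" using c by (simp add: le_Liminf_iff)
  then have "eventually (\<lambda>w. w \<noteq> x \<longrightarrow> c < f w) (nhds x)" by (simp add: eventually_at_filter)
  then have "eventually (\<lambda>w. c < f w) (nhds x)"
    by eventually_elim (use c in auto)
  from eventually_compose_filterlim[OF this s] show ?thesis .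
qed

lemma frechet_prox:
  fixes f :: "'a::euclidean_space \<Rightarrow> ereal"
  assumes pr: "proper_fun f" and P: "x \<in> prox_set f t u" and t: "t > 0"
  shows "(1 / t) *\<^sub>R (u - x) \<in> frechet_subdiff f x"
proof -
  define v where "v = (1 / t) *\<^sub>R (u - x)"
  have fin: "\<bar>f x\<bar> \<noteq> \<infinity>" by (rule prox_finite[OF pr P])
  then obtain a where a: "f x = ereal a" by (cases "f x") auto
  have star: "ereal (- norm (y - x) / (2 * t)) \<le> (f y - f x - ereal (v \<bullet> (y - x))) * ereal (1 / norm (y - x))"
    if yx: "y \<noteq> x" for y
  proof -
    have np: "norm (y - x) > 0" using yx by simp
    show ?thesis
    proof (cases "f y")
      case PInf
      then show ?thesis using np a by simp
    next
      case MInf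
      then show ?thesis using pr unfolding proper_fun_def by auto
    next
      case (real b)
      have "f x + ereal ((norm (x - u))\<^sup>2 / (2 * t)) \<le> f y + ereal ((norm (y - u))\<^sup>2 / (2 * t))"
        using P unfolding prox_set_def by auto
      then have ineq: "a + (norm (x - u))\<^sup>2 / (2 * t) \<le> b + (norm (y - u))\<^sup>2 / (2 * t)"
        using a real by simp
      have nid: "(norm (y - u))\<^sup>2 = (norm (y - x))\<^sup>2 + 2 * ((y - x) \<bullet> (x - u)) + (norm (x - u))\<^sup>2"
        by (simp add: power2_norm_eq_inner inner_diff_left inner_diff_right inner_commute algebra_simps)
      have h: "(norm (x - u))\<^sup>2 / (2 * t) - (norm (y - u))\<^sup>2 / (2 * t) = - ((norm (y - x))\<^sup>2 / (2 * t)) - ((y - x) \<bullet> (x - u)) / t"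
        unfolding nid using t by (simp add: field_simps)
      have vv: "v \<bullet> (y - x) = - (((y - x) \<bullet> (x - u)) / t)"
      proof -
        have "(u - x) \<bullet> (y - x) = - ((y - x) \<bullet> (x - u))" by (metis inner_commute inner_minus_left minus_diff_eq)
        then show ?thesis unfolding v_def by simp
      qed
      have "b - a - v \<bullet> (y - x) \<ge> - ((norm (y - x))\<^sup>2 / (2 * t))"
        using ineq h vv by linarith
      then have "(b - a - v \<bullet> (y - x)) / norm (y - x) \<ge> (- ((norm (y - x))\<^sup>2 / (2 * t))) / norm (y - x)"
        using np by (intro divide_right_mono) auto
      also have "(- ((norm (y - x))\<^sup>2 / (2 * t))) / norm (y - x) = - norm (y - x) / (2 * t)"
        using np by (simp add: power2_eq_square field_simps)
      finally show ?thesis using a real by simp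
    qed
  qed
  have lim: "((\<lambda>y. ereal (- norm (y - x) / (2 * t))) \<longlongrightarrow> ereal 0) (at x)"
  proof -
    have "((\<lambda>y. - norm (y - x) / (2 * t)) \<longlongrightarrow> - norm (x - x) / (2 * t)) (at x)"
      using t by (intro tendsto_intros) auto
    then show ?thesis by (simp add: tendsto_ereal)
  qed
  have "0 \<le> Liminf (at x) (\<lambda>y. (f y - f x - ereal (v \<bullet> (y - x))) * ereal (1 / norm (y - x)))"
  proof (subst le_Liminf_iff, intro allI impI)
    fix c :: ereal assume c: "c < 0"
    have "eventually (\<lambda>y. c < ereal (- norm (y - x) / (2 * t))) (at x)"
      using order_tendstoD(1)[OF lim] c by (simp add: zero_ereal_def)
    moreover have "eventually (\<lambda>y. y \<noteq> x) (at x)" by (simp add: eventually_at_filter)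
    ultimately show "eventually (\<lambda>y. c < (f y - f x - ereal (v \<bullet> (y - x))) * ereal (1 / norm (y - x))) (at x)"
      by eventually_elim (use star in \<open>blast intro: less_le_trans\<close>)
  qed
  then show ?thesis unfolding frechet_subdiff_def v_def[symmetric] using fin by simp
qed

lemma cluster_eq:
  fixes a b :: "nat \<Rightarrow> 'a::real_normed_vector"
  assumes "(\<lambda>k. a k - b k) \<longlonglongrightarrow> 0"
  shows "cluster_pts a = cluster_pts b"
proof -
  have *: "p \<in> cluster_pts b" if h1: "p \<in> cluster_pts a" and h2: "(\<lambda>k. a k - b k) \<longlonglongrightarrow> 0" for a b :: "nat \<Rightarrow> 'a" and p
  proof -
    obtain r where r: "strict_mono r" "(a \<circ> r) \<longlonglongrightarrow> p" using h1 unfolding cluster_pts_def by auto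
    have "(\<lambda>j. a (r j) - b (r j)) \<longlonglongrightarrow> 0"
      using LIMSEQ_subseq_LIMSEQ[OF h2 r(1)] by (simp add: o_def)
    then have "(\<lambda>j. a (r j) - (a (r j) - b (r j))) \<longlonglongrightarrow> p - 0"
      using r(2) by (intro tendsto_diff) (simp_all add: o_def)
    then have "(b \<circ> r) \<longlonglongrightarrow> p" by (simp add: o_def)
    then show ?thesis using r(1) unfolding cluster_pts_def by auto
  qed
  have "(\<lambda>k. b k - a k) \<longlonglongrightarrow> 0"
    using tendsto_minus[OF assms] by (simp add: algebra_simps)
  then show ?thesis using * assms by blast
qed
lemma sqdiff: "(norm (y - c))\<^sup>2 - (norm (w - c))\<^sup>2 = (norm y)\<^sup>2 - (norm w)\<^sup>2 - 2 * ((y - w) \<bullet> (c::'a::real_inner))"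
  by (simp add: power2_norm_eq_inner inner_diff_left inner_diff_right inner_commute algebra_simps)

lemma Qid:
  fixes p q G H y w :: "'a::real_inner"
  assumes g: "0 < g" and al: "0 < al" "al < 1"
  shows "(fp + (y - p) \<bullet> G + (norm (y - p))\<^sup>2 / (2 * (g / al)) + fq + (y - q) \<bullet> H + (norm (y - q))\<^sup>2 / (2 * (g / (1 - al))))
      - (fp + (w - p) \<bullet> G + (norm (w - p))\<^sup>2 / (2 * (g / al)) + fq + (w - q) \<bullet> H + (norm (w - q))\<^sup>2 / (2 * (g / (1 - al))))
      = ((norm (y - (al *\<^sub>R p + (1 - al) *\<^sub>R q - g *\<^sub>R (G + H))))\<^sup>2
         - (norm (w - (al *\<^sub>R p + (1 - al) *\<^sub>R q - g *\<^sub>R (G + H))))\<^sup>2) / (2 * g)"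
proof -
  have e1: "(y - p) \<bullet> G - (w - p) \<bullet> G = (y - w) \<bullet> G" by (simp add: inner_diff_left)
  have e2: "(y - q) \<bullet> H - (w - q) \<bullet> H = (y - w) \<bullet> H" by (simp add: inner_diff_left)
  have e3: "(norm (y - p))\<^sup>2 / (2 * (g / al)) - (norm (w - p))\<^sup>2 / (2 * (g / al))
      = al / (2 * g) * ((norm y)\<^sup>2 - (norm w)\<^sup>2 - 2 * ((y - w) \<bullet> p))"
  proof -
    have "(norm (y - p))\<^sup>2 / (2 * (g / al)) - (norm (w - p))\<^sup>2 / (2 * (g / al)) = al / (2 * g) * ((norm (y - p))\<^sup>2 - (norm (w - p))\<^sup>2)"
      using g al by (simp add: field_simps)
    then show ?thesis by (simp only: sqdiff)
  qed
  have e4: "(norm (y - q))\<^sup>2 / (2 * (g / (1 - al))) - (norm (w - q))\<^sup>2 / (2 * (g / (1 - al)))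
      = (1 - al) / (2 * g) * ((norm y)\<^sup>2 - (norm w)\<^sup>2 - 2 * ((y - w) \<bullet> q))"
  proof -
    have "1 - al \<noteq> 0" using al by simp
    then have "(norm (y - q))\<^sup>2 / (2 * (g / (1 - al))) - (norm (w - q))\<^sup>2 / (2 * (g / (1 - al))) = (1 - al) / (2 * g) * ((norm (y - q))\<^sup>2 - (norm (w - q))\<^sup>2)"
      using g by (simp add: field_simps)
    then show ?thesis by (simp only: sqdiff)
  qed
  have e5: "(y - w) \<bullet> (al *\<^sub>R p + (1 - al) *\<^sub>R q - g *\<^sub>R (G + H))
      = al * ((y - w) \<bullet> p) + (1 - al) * ((y - w) \<bullet> q) - g * ((y - w) \<bullet> G) - g * ((y - w) \<bullet> H)"
    by (simp add: inner_add_right inner_diff_right algebra_simps)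
  have R: "((norm (y - (al *\<^sub>R p + (1 - al) *\<^sub>R q - g *\<^sub>R (G + H))))\<^sup>2
         - (norm (w - (al *\<^sub>R p + (1 - al) *\<^sub>R q - g *\<^sub>R (G + H))))\<^sup>2) / (2 * g)
       = ((norm y)\<^sup>2 - (norm w)\<^sup>2 - 2 * (al * ((y - w) \<bullet> p) + (1 - al) * ((y - w) \<bullet> q) - g * ((y - w) \<bullet> G) - g * ((y - w) \<bullet> H))) / (2 * g)"
    unfolding sqdiff e5 ..
  have L: "(fp + (y - p) \<bullet> G + (norm (y - p))\<^sup>2 / (2 * (g / al)) + fq + (y - q) \<bullet> H + (norm (y - q))\<^sup>2 / (2 * (g / (1 - al))))
      - (fp + (w - p) \<bullet> G + (norm (w - p))\<^sup>2 / (2 * (g / al)) + fq + (w - q) \<bullet> H + (norm (w - q))\<^sup>2 / (2 * (g / (1 - al))))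
      = (y - w) \<bullet> G + (y - w) \<bullet> H + al / (2 * g) * ((norm y)\<^sup>2 - (norm w)\<^sup>2 - 2 * ((y - w) \<bullet> p))
        + (1 - al) / (2 * g) * ((norm y)\<^sup>2 - (norm w)\<^sup>2 - 2 * ((y - w) \<bullet> q))"
    using e1 e2 e3 e4 by linarith
  show ?thesis unfolding L R using g by (simp add: field_simps)
qed

lemma QLB:
  fixes f1 f2 :: "'a::real_inner \<Rightarrow> real"
  assumes D1: "\<And>x. (f1 has_derivative (\<lambda>h. g1 x \<bullet> h)) (at x)" and Lip1: "L1-lipschitz_on UNIV g1"
    and D2: "\<And>x. (f2 has_derivative (\<lambda>h. g2 x \<bullet> h)) (at x)" and Lip2: "L2-lipschitz_on UNIV g2"
    and g: "0 < g" and al: "0 < al" "al < 1" and L: "0 < L1" "0 < L2"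
    and gL: "g \<le> al / L1" "g \<le> (1 - al) / L2"
  shows "f1 y + f2 y \<le> f1 p + (y - p) \<bullet> g1 p + (norm (y - p))\<^sup>2 / (2 * (g / al)) + f2 q + (y - q) \<bullet> g2 q + (norm (y - q))\<^sup>2 / (2 * (g / (1 - al)))"
proof -
  have a: "f1 y \<le> f1 p + g1 p \<bullet> (y - p) + L1/2 * (norm (y - p))^2" by (rule descent[OF D1 Lip1])
  have b: "f2 y \<le> f2 q + g2 q \<bullet> (y - q) + L2/2 * (norm (y - q))^2" by (rule descent[OF D2 Lip2])
  have c: "L1/2 * (norm (y - p))^2 \<le> (norm (y - p))\<^sup>2 / (2 * (g / al))"
  proof -
    have "L1 \<le> al / g" using gL(1) g L al by (simp add: field_simps)
    then have "L1/2 * (norm (y - p))^2 \<le> (al / g)/2 * (norm (y - p))^2" by (intro mult_right_mono) auto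
    then show ?thesis using g al by (simp add: field_simps)
  qed
  have d: "L2/2 * (norm (y - q))^2 \<le> (norm (y - q))\<^sup>2 / (2 * (g / (1 - al)))"
  proof -
    have "L2 \<le> (1 - al) / g" using gL(2) g L al by (simp add: field_simps)
    then have "L2/2 \<le> ((1 - al) / g)/2" by (rule divide_right_mono) simp
    then have "L2/2 * (norm (y - q))^2 \<le> ((1 - al) / g)/2 * (norm (y - q))^2" by (intro mult_right_mono) auto
    moreover have "1 - al \<noteq> 0" using al by simp
    then have "((1 - al) / g)/2 * (norm (y - q))^2 = (norm (y - q))\<^sup>2 / (2 * (g / (1 - al)))"
      using g by (simp add: field_simps)
    ultimately show ?thesis by simp
  qed
  have a': "g1 p \<bullet> (y - p) = (y - p) \<bullet> g1 p" "g2 q \<bullet> (y - q) = (y - q) \<bullet> g2 q" by (simp_all add: inner_commute)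
  show ?thesis using a b c d a' by linarith
qed
lemma sq_to_zero:
  fixes X :: "nat \<Rightarrow> 'a::real_normed_vector"
  assumes "(\<lambda>k. (norm (X k))\<^sup>2) \<longlonglongrightarrow> 0"
  shows "X \<longlonglongrightarrow> 0"
proof -
  have "(\<lambda>k. sqrt ((norm (X k))\<^sup>2)) \<longlonglongrightarrow> sqrt 0" by (intro tendsto_intros assms)
  then have "(\<lambda>k. norm (X k)) \<longlonglongrightarrow> 0" by simp
  then show ?thesis by (simp add: tendsto_norm_zero_iff)
qed

lemma lip_diff_zero:
  fixes g :: "'a::real_normed_vector \<Rightarrow> 'b::real_normed_vector" and x :: "nat \<Rightarrow> 'a"
  assumes Lip: "L-lipschitz_on UNIV g" and X: "(\<lambda>k. x (Suc k) - x k) \<longlonglongrightarrow> 0"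
  shows "(\<lambda>k. g (x (Suc k)) - g (x k)) \<longlonglongrightarrow> 0"
proof (rule tendsto_0_le[OF X, where K = L])
  show "\<forall>\<^sub>F k in sequentially. norm (g (x (Suc k)) - g (x k)) \<le> norm (x (Suc k) - x k) * L"
    using lipschitz_on_normD[OF Lip] by (simp add: mult.commute)
qed

theorem theorem2:
  fixes f1 f2 :: "'a::euclidean_space \<Rightarrow> real"
    and g1 g2 :: "'a \<Rightarrow> 'a"
    and f3 :: "'a \<Rightarrow> ereal"
    and L1 L2 lam \<alpha> \<gamma> \<epsilon>1 \<epsilon>2 :: real
    and x1 x2 x3 z1 z2 :: "nat \<Rightarrow> 'a"
  assumes cvx1: "convex_on UNIV f1" and cvx2: "convex_on UNIV f2"
    and grad1: "\<And>x. (f1 has_derivative (\<lambda>h. g1 x \<bullet> h)) (at x)"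
    and grad2: "\<And>x. (f2 has_derivative (\<lambda>h. g2 x \<bullet> h)) (at x)"
    and L1: "L1 > 0" and L2: "L2 > 0"
    and lip1: "L1-lipschitz_on UNIV g1" and lip2: "L2-lipschitz_on UNIV g2"
    and proper3: "proper_fun f3" and lsc3: "lsc_fun f3"
    and minimizer: "\<exists>x. \<forall>y. ereal (f1 x) + ereal (f2 x) + f3 x \<le> ereal (f1 y) + ereal (f2 y) + f3 y"
    and lam: "0 < lam" "lam < 2"
    and alpha: "(2 * lam - 3 + sqrt (9 - 4 * lam)) / 2 < \<alpha>" "\<alpha> < 1"
    and eps1: "\<alpha> / (2 * \<alpha> - lam) < \<epsilon>1" "\<epsilon>1 < (2 - lam) / (1 - \<alpha>)"
    and eps2: "\<alpha> * L2 / lam < \<epsilon>2"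
    and gam: "\<gamma> \<in> stepsize_set L1 L2 \<alpha> lam \<epsilon>1 \<epsilon>2"
    and gam2: "\<gamma> \<le> min (\<alpha> / L1) ((1 - \<alpha>) / L2)"
    and it1: "\<And>k. x1 k \<in> prox_set (\<lambda>x. ereal (f1 x)) \<gamma> (z1 k)"
    and it2: "\<And>k. x2 k \<in> prox_set (\<lambda>x. ereal (f2 x)) (\<gamma> / \<alpha>) (z2 k /\<^sub>R \<alpha> + x1 k)"
    and it3: "\<And>k. x3 k \<in> prox_set f3 \<gamma> (x1 k - z1 k + x2 k - z2 k)"
    and upd1: "\<And>k. z1 (Suc k) = z1 k + lam *\<^sub>R (x3 k - x1 k)"
    and upd2: "\<And>k. z2 (Suc k) = z2 k + lam *\<^sub>R (x3 k - x2 k)"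
  shows
   "((\<lambda>k. x1 (Suc k) - x1 k) \<longlonglongrightarrow> 0) \<and> ((\<lambda>k. x2 (Suc k) - x2 k) \<longlonglongrightarrow> 0)
    \<and> ((\<lambda>k. x3 (Suc k) - x3 k) \<longlonglongrightarrow> 0)
    \<and> ((\<lambda>k. z1 (Suc k) - z1 k) \<longlonglongrightarrow> 0) \<and> ((\<lambda>k. z2 (Suc k) - z2 k) \<longlonglongrightarrow> 0)
    \<and> ((\<lambda>k. x3 k - x1 k) \<longlonglongrightarrow> 0) \<and> ((\<lambda>k. x3 k - x2 k) \<longlonglongrightarrow> 0)
    \<and> (bounded (range x1) \<and> bounded (range x2) \<and> bounded (range x3)
        \<and> bounded (range z1) \<and> bounded (range z2) \<longrightarrow>
         (\<forall>xs \<in> cluster_pts x3.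
            ((\<lambda>k. ryu_env f1 g1 f2 g2 f3 \<gamma> \<alpha> (z1 k) (z2 k))
               \<longlonglongrightarrow> ereal (f1 xs) + ereal (f2 xs) + f3 xs)
          \<and> ((\<lambda>k. ereal (f1 (x1 k)) + ereal (f2 (x2 k)) + f3 (x3 k))
               \<longlonglongrightarrow> ereal (f1 xs) + ereal (f2 xs) + f3 xs))
       \<and> cluster_pts x1 = cluster_pts x3 \<and> cluster_pts x2 = cluster_pts x3
       \<and> (\<forall>xs \<in> cluster_pts x3. - (g1 xs + g2 xs) \<in> limiting_subdiff f3 xs))"
proof -
  have lam0: "0 < lam" and lam2: "lam < 2" using lam by auto
  have sq: "3 - lam \<le> sqrt (9 - 4 * lam)"
  proof (rule real_le_rsqrt)
    have "lam * lam \<le> 2 * lam" using lam0 lam2 by (intro mult_right_mono) auto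
    then show "(3 - lam)\<^sup>2 \<le> 9 - 4 * lam" by (simp add: power2_eq_square algebra_simps)
  qed
  have "2 * lam - 3 + sqrt (9 - 4 * lam) < 2 * \<alpha>" using alpha(1) by simp
  then have al_lam: "lam < 2 * \<alpha>" using sq by linarith
  have al0: "0 < \<alpha>" using al_lam lam0 by linarith
  have al1: "\<alpha> < 1" using alpha(2) .
  have e1pos: "0 < \<epsilon>1"
  proof -
    have "0 < \<alpha> / (2 * \<alpha> - lam)" using al0 al_lam by simp
    then show ?thesis using eps1(1) by linarith
  qed
  have e2pos: "0 < \<epsilon>2"
  proof -
    have "0 < \<alpha> * L2 / lam" using al0 L2 lam0 by simp
    then show ?thesis using eps2 by linarith
  qed
  have gpos: "0 < \<gamma>" and g0: "\<gamma> \<le> lam / (2 * L1)" and g1c: "\<gamma> \<le> lam / (2 * L2) - \<alpha> / (2 * \<epsilon>2)"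
    and g2c: "\<gamma> < \<alpha> * (2 - lam - (1 - \<alpha>) * \<epsilon>1) / (\<alpha> * \<epsilon>2 + 2 * (1 - \<alpha>) * L1)"
    and g3c: "\<gamma> < (1 - \<alpha>) * (\<epsilon>1 * (2 * \<alpha> - lam) - \<alpha>) / (2 * \<alpha> * L2 * \<epsilon>1)"
    using gam unfolding stepsize_set_def Let_def by auto
  have gL: "\<gamma> \<le> \<alpha> / L1" "\<gamma> \<le> (1 - \<alpha>) / L2" using gam2 by auto
  define cu where "cu = \<alpha> * (2 - lam) - \<alpha> * (1 - \<alpha>) * \<epsilon>1 - \<alpha> * \<gamma> * \<epsilon>2 - 2 * (1 - \<alpha>) * \<gamma> * L1"
  define cv where "cv = (1 - \<alpha>) * (2 * \<alpha> - lam) - (1 - \<alpha>) * \<alpha> / \<epsilon>1 - 2 * \<alpha> * \<gamma> * L2"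
  have cu_pos: "0 < cu"
  proof -
    have den: "0 < \<alpha> * \<epsilon>2 + 2 * (1 - \<alpha>) * L1" using al0 al1 e2pos L1 by (simp add: add_pos_pos)
    from g2c have "\<gamma> * (\<alpha> * \<epsilon>2 + 2 * (1 - \<alpha>) * L1) < \<alpha> * (2 - lam - (1 - \<alpha>) * \<epsilon>1)"
      using den by (simp add: pos_less_divide_eq)
    then show ?thesis unfolding cu_def by (simp add: algebra_simps)
  qed
  have cv_pos: "0 < cv"
  proof -
    have den: "0 < 2 * \<alpha> * L2 * \<epsilon>1" using al0 L2 e1pos by simp
    from g3c have "\<gamma> * (2 * \<alpha> * L2 * \<epsilon>1) < (1 - \<alpha>) * (\<epsilon>1 * (2 * \<alpha> - lam) - \<alpha>)"
      using den by (simp add: pos_less_divide_eq)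
    then have "(\<gamma> * (2 * \<alpha> * L2 * \<epsilon>1)) / \<epsilon>1 < ((1 - \<alpha>) * (\<epsilon>1 * (2 * \<alpha> - lam) - \<alpha>)) / \<epsilon>1"
      using e1pos by (intro divide_strict_right_mono) auto
    moreover have "(\<gamma> * (2 * \<alpha> * L2 * \<epsilon>1)) / \<epsilon>1 = 2 * \<alpha> * \<gamma> * L2" using e1pos by simp
    moreover have "((1 - \<alpha>) * (\<epsilon>1 * (2 * \<alpha> - lam) - \<alpha>)) / \<epsilon>1 = (1 - \<alpha>) * (2 * \<alpha> - lam) - (1 - \<alpha>) * \<alpha> / \<epsilon>1"
      using e1pos by (simp add: field_simps)
    ultimately show ?thesis unfolding cv_def by linarith
  qed
  have opt1: "z1 k = x1 k + \<gamma> *\<^sub>R g1 (x1 k)" for k by (rule prox_opt[OF grad1 it1 gpos])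
  have gal: "0 < \<gamma> / \<alpha>" using gpos al0 by simp
  have opt2: "z2 k = \<alpha> *\<^sub>R x2 k - \<alpha> *\<^sub>R x1 k + \<gamma> *\<^sub>R g2 (x2 k)" for k
  proof -
    have "z2 k /\<^sub>R \<alpha> + x1 k = x2 k + (\<gamma> / \<alpha>) *\<^sub>R g2 (x2 k)" by (rule prox_opt[OF grad2 it2 gal])
    then have "\<alpha> *\<^sub>R (z2 k /\<^sub>R \<alpha> + x1 k) = \<alpha> *\<^sub>R (x2 k + (\<gamma> / \<alpha>) *\<^sub>R g2 (x2 k))" by simp
    then show ?thesis using al0 by (simp add: algebra_simps)
  qed
  have z1r: "lam *\<^sub>R (x3 k - x1 k) = (x1 (Suc k) - x1 k) + \<gamma> *\<^sub>R (g1 (x1 (Suc k)) - g1 (x1 k))" for k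
  proof -
    have "lam *\<^sub>R (x3 k - x1 k) = z1 (Suc k) - z1 k" using upd1[of k] by simp
    also have "\<dots> = (x1 (Suc k) - x1 k) + \<gamma> *\<^sub>R (g1 (x1 (Suc k)) - g1 (x1 k))"
      by (subst opt1[of "Suc k"], subst opt1[of k]) (simp add: algebra_simps)
    finally show ?thesis .
  qed
  have z2r: "lam *\<^sub>R (x3 k - x2 k) = \<alpha> *\<^sub>R (x2 (Suc k) - x2 k) - \<alpha> *\<^sub>R (x1 (Suc k) - x1 k) + \<gamma> *\<^sub>R (g2 (x2 (Suc k)) - g2 (x2 k))" for k
  proof -
    have "lam *\<^sub>R (x3 k - x2 k) = z2 (Suc k) - z2 k" using upd2[of k] by simp
    also have "\<dots> = \<alpha> *\<^sub>R (x2 (Suc k) - x2 k) - \<alpha> *\<^sub>R (x1 (Suc k) - x1 k) + \<gamma> *\<^sub>R (g2 (x2 (Suc k)) - g2 (x2 k))"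
      by (subst opt2[of "Suc k"], subst opt2[of k]) (simp add: algebra_simps)
    finally show ?thesis .
  qed
  have fin3: "\<bar>f3 (x3 k)\<bar> \<noteq> \<infinity>" for k by (rule prox_finite[OF proper3 it3])
  define r3 where "r3 k = real_of_ereal (f3 (x3 k))" for k
  have r3: "f3 (x3 k) = ereal (r3 k)" for k unfolding r3_def using fin3[of k] by (simp add: ereal_real)
  define Q where "Q k y = f1 (x1 k) + (y - x1 k) \<bullet> g1 (x1 k) + (norm (y - x1 k))\<^sup>2 / (2 * (\<gamma> / \<alpha>))
     + f2 (x2 k) + (y - x2 k) \<bullet> g2 (x2 k) + (norm (y - x2 k))\<^sup>2 / (2 * (\<gamma> / (1 - \<alpha>)))" for k y
  define u where "u k = x1 k - z1 k + x2 k - z2 k" for k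
  have u_eq: "u k = \<alpha> *\<^sub>R x1 k + (1 - \<alpha>) *\<^sub>R x2 k - \<gamma> *\<^sub>R (g1 (x1 k) + g2 (x2 k))" for k
    unfolding u_def by (subst opt1[of k], subst opt2[of k]) (simp add: algebra_simps)
  have Qid: "Q k y - Q k w = ((norm (y - u k))\<^sup>2 - (norm (w - u k))\<^sup>2) / (2 * \<gamma>)" for k y w
    unfolding Q_def u_eq by (rule Qid[OF gpos al0 al1])
  have P1: "prox_pt (\<lambda>x. ereal (f1 x)) \<gamma> (z1 k) = x1 k" for k by (rule prox_pt_eq[OF cvx1 grad1 it1 gpos])
  have P2: "prox_pt (\<lambda>x. ereal (f2 x)) (\<gamma> / \<alpha>) (z2 k /\<^sub>R \<alpha> + x1 k) = x2 k" for k
    by (rule prox_pt_eq[OF cvx2 grad2 it2 gal])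
  have env: "ryu_env f1 g1 f2 g2 f3 \<gamma> \<alpha> (z1 k) (z2 k) = (INF y. f3 y + ereal (Q k y))" for k
    unfolding ryu_env_def Let_def P1 P2 Q_def ..
  define E where "E k = r3 k + Q k (x3 k)" for k
  have envE: "ryu_env f1 g1 f2 g2 f3 \<gamma> \<alpha> (z1 k) (z2 k) = ereal (E k)" for k
  proof -
    have "(INF y. f3 y + ereal (Q k y)) = ereal (E k)"
    proof (rule antisym)
      show "(INF y. f3 y + ereal (Q k y)) \<le> ereal (E k)"
        using INF_lower[of "x3 k" UNIV "\<lambda>y. f3 y + ereal (Q k y)"] unfolding E_def r3 by simp
      show "ereal (E k) \<le> (INF y. f3 y + ereal (Q k y))"
      proof (rule INF_greatest)
        fix y
        have pr: "f3 (x3 k) + ereal ((norm (x3 k - u k))\<^sup>2 / (2 * \<gamma>)) \<le> f3 y + ereal ((norm (y - u k))\<^sup>2 / (2 * \<gamma>))"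
          using it3[of k] unfolding prox_set_def u_def by auto
        show "ereal (E k) \<le> f3 y + ereal (Q k y)"
        proof (cases "f3 y")
          case (real b)
          have a: "r3 k + (norm (x3 k - u k))\<^sup>2 / (2 * \<gamma>) \<le> b + (norm (y - u k))\<^sup>2 / (2 * \<gamma>)"
            using pr real r3[of k] by simp
          have b: "Q k y - Q k (x3 k) = ((norm (y - u k))\<^sup>2 - (norm (x3 k - u k))\<^sup>2) / (2 * \<gamma>)" by (rule Qid)
          have c: "((norm (y - u k))\<^sup>2 - (norm (x3 k - u k))\<^sup>2) / (2 * \<gamma>) = (norm (y - u k))\<^sup>2 / (2 * \<gamma>) - (norm (x3 k - u k))\<^sup>2 / (2 * \<gamma>)"
            by (rule diff_divide_distrib)
          have "E k \<le> b + Q k y" unfolding E_def using a b c by linarith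
          then show ?thesis using real by simp
        next
          case PInf then show ?thesis by simp
        next
          case MInf then show ?thesis using proper3 unfolding proper_fun_def by auto
        qed
      qed
    qed
    then show ?thesis using env by simp
  qed
  obtain xm where xm: "\<And>y. ereal (f1 xm) + ereal (f2 xm) + f3 xm \<le> ereal (f1 y) + ereal (f2 y) + f3 y"
    using minimizer by auto
  have fxm: "\<bar>f3 xm\<bar> \<noteq> \<infinity>"
  proof -
    obtain w where w: "f3 w \<noteq> \<infinity>" using proper3 unfolding proper_fun_def by auto
    have "ereal (f1 xm) + ereal (f2 xm) + f3 xm \<le> ereal (f1 w) + ereal (f2 w) + f3 w" by (rule xm)
    moreover have "ereal (f1 w) + ereal (f2 w) + f3 w \<noteq> \<infinity>" using w by simp
    ultimately have "f3 xm \<noteq> \<infinity>" by auto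
    moreover have "f3 xm \<noteq> -\<infinity>" using proper3 unfolding proper_fun_def by auto
    ultimately show ?thesis by auto
  qed
  define m where "m = f1 xm + f2 xm + real_of_ereal (f3 xm)"
  have mle: "m \<le> f1 y + f2 y + b" if "f3 y = ereal b" for y b
    using xm[of y] that fxm unfolding m_def by (cases "f3 xm") auto
  have QLBk: "f1 y + f2 y \<le> Q k y" for k y
    unfolding Q_def by (rule QLB[OF grad1 lip1 grad2 lip2 gpos al0 al1 L1 L2 gL])
  have Elb: "m \<le> E k" for k
    using mle[OF r3[of k]] QLBk[of "x3 k" k] unfolding E_def by linarith
  have Estep: "E (Suc k) \<le> r3 k + Q (Suc k) (x3 k)" for k
  proof -
    have "ereal (E (Suc k)) = (INF y. f3 y + ereal (Q (Suc k) y))" using envE env by metis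
    also have "\<dots> \<le> f3 (x3 k) + ereal (Q (Suc k) (x3 k))" by (rule INF_lower) simp
    finally show ?thesis unfolding r3 by simp
  qed
  have key: "2 * lam * \<gamma> * (Q (Suc k) (x3 k) - Q k (x3 k)) \<le> - cu * (norm (x1 (Suc k) - x1 k))\<^sup>2 - cv * (norm (x2 (Suc k) - x2 k))\<^sup>2" for k
    unfolding Q_def cu_def cv_def
    by (rule key_vec[OF cvx1 grad1 lip1 cvx2 grad2 lip2 lam0 al0 al1 gpos L1 L2 e1pos e2pos g0 g1c z1r z2r])
  have dec: "cu * (norm (x1 (Suc k) - x1 k))\<^sup>2 + cv * (norm (x2 (Suc k) - x2 k))\<^sup>2 \<le> 2 * lam * \<gamma> * (E k - E (Suc k))" for k
  proof -
    have "E (Suc k) - E k \<le> Q (Suc k) (x3 k) - Q k (x3 k)" using Estep[of k] E_def[of k] by linarith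
    then have "2 * lam * \<gamma> * (E (Suc k) - E k) \<le> 2 * lam * \<gamma> * (Q (Suc k) (x3 k) - Q k (x3 k))"
      using lam0 gpos by (intro mult_left_mono) auto
    moreover have "2 * lam * \<gamma> * (E k - E (Suc k)) = - (2 * lam * \<gamma> * (E (Suc k) - E k))" by (simp add: algebra_simps)
    ultimately show ?thesis using key[of k] by linarith
  qed
  define S where "S k = cu * (norm (x1 (Suc k) - x1 k))\<^sup>2 + cv * (norm (x2 (Suc k) - x2 k))\<^sup>2" for k
  have Snn: "0 \<le> S k" for k unfolding S_def using cu_pos cv_pos by simp
  have Ssum: "(\<Sum>i<n. S i) \<le> 2 * lam * \<gamma> * (E 0 - m)" for n
  proof -
    have "(\<Sum>i<n. S i) \<le> (\<Sum>i<n. 2 * lam * \<gamma> * (E i - E (Suc i)))" unfolding S_def by (rule sum_mono) (rule dec)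
    also have "\<dots> = 2 * lam * \<gamma> * (E 0 - E n)" by (simp add: sum_distrib_left[symmetric] sum_lessThan_telescope')
    also have "\<dots> \<le> 2 * lam * \<gamma> * (E 0 - m)" using Elb[of n] lam0 gpos by (intro mult_left_mono) auto
    finally show ?thesis .
  qed
  have "summable S" by (rule summableI_nonneg_bounded[OF Snn Ssum])
  then have S0: "S \<longlonglongrightarrow> 0" by (rule summable_LIMSEQ_zero)
  have n1: "(\<lambda>k. cu * (norm (x1 (Suc k) - x1 k))\<^sup>2) \<longlonglongrightarrow> 0"
    by (rule real_tendsto_sandwich[OF _ _ tendsto_const S0]) (use cv_pos cu_pos in \<open>auto simp: S_def\<close>)
  have n2: "(\<lambda>k. cv * (norm (x2 (Suc k) - x2 k))\<^sup>2) \<longlonglongrightarrow> 0"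
    by (rule real_tendsto_sandwich[OF _ _ tendsto_const S0]) (use cv_pos cu_pos in \<open>auto simp: S_def\<close>)
  have D1: "(\<lambda>k. x1 (Suc k) - x1 k) \<longlonglongrightarrow> 0"
  proof (rule sq_to_zero)
    have "(\<lambda>k. (cu * (norm (x1 (Suc k) - x1 k))\<^sup>2) / cu) \<longlonglongrightarrow> 0 / cu" by (intro tendsto_intros n1) (use cu_pos in simp)
    then show "(\<lambda>k. (norm (x1 (Suc k) - x1 k))\<^sup>2) \<longlonglongrightarrow> 0" using cu_pos by simp
  qed
  have D2: "(\<lambda>k. x2 (Suc k) - x2 k) \<longlonglongrightarrow> 0"
  proof (rule sq_to_zero)
    have "(\<lambda>k. (cv * (norm (x2 (Suc k) - x2 k))\<^sup>2) / cv) \<longlonglongrightarrow> 0 / cv" by (intro tendsto_intros n2) (use cv_pos in simp)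
    then show "(\<lambda>k. (norm (x2 (Suc k) - x2 k))\<^sup>2) \<longlonglongrightarrow> 0" using cv_pos by simp
  qed
  have G1: "(\<lambda>k. g1 (x1 (Suc k)) - g1 (x1 k)) \<longlonglongrightarrow> 0" by (rule lip_diff_zero[OF lip1 D1])
  have G2: "(\<lambda>k. g2 (x2 (Suc k)) - g2 (x2 k)) \<longlonglongrightarrow> 0" by (rule lip_diff_zero[OF lip2 D2])
  have a1eq: "x3 k - x1 k = (1 / lam) *\<^sub>R ((x1 (Suc k) - x1 k) + \<gamma> *\<^sub>R (g1 (x1 (Suc k)) - g1 (x1 k)))" for k
    using arg_cong[OF z1r[of k], of "\<lambda>v. (1 / lam) *\<^sub>R v"] lam0 by simp
  have a2eq: "x3 k - x2 k = (1 / lam) *\<^sub>R (\<alpha> *\<^sub>R (x2 (Suc k) - x2 k) - \<alpha> *\<^sub>R (x1 (Suc k) - x1 k) + \<gamma> *\<^sub>R (g2 (x2 (Suc k)) - g2 (x2 k)))" for k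
    using arg_cong[OF z2r[of k], of "\<lambda>v. (1 / lam) *\<^sub>R v"] lam0 by simp
  have A1: "(\<lambda>k. x3 k - x1 k) \<longlonglongrightarrow> 0"
  proof -
    have "(\<lambda>k. (1 / lam) *\<^sub>R ((x1 (Suc k) - x1 k) + \<gamma> *\<^sub>R (g1 (x1 (Suc k)) - g1 (x1 k)))) \<longlonglongrightarrow> (1 / lam) *\<^sub>R (0 + \<gamma> *\<^sub>R 0)"
      by (intro tendsto_intros D1 G1)
    then show ?thesis unfolding a1eq by simp
  qed
  have A2: "(\<lambda>k. x3 k - x2 k) \<longlonglongrightarrow> 0"
  proof -
    have "(\<lambda>k. (1 / lam) *\<^sub>R (\<alpha> *\<^sub>R (x2 (Suc k) - x2 k) - \<alpha> *\<^sub>R (x1 (Suc k) - x1 k) + \<gamma> *\<^sub>R (g2 (x2 (Suc k)) - g2 (x2 k)))) \<longlonglongrightarrow> (1 / lam) *\<^sub>R (\<alpha> *\<^sub>R 0 - \<alpha> *\<^sub>R 0 + \<gamma> *\<^sub>R 0)"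
      by (intro tendsto_intros D1 D2 G2)
    then show ?thesis unfolding a2eq by simp
  qed
  have Z1: "(\<lambda>k. z1 (Suc k) - z1 k) \<longlonglongrightarrow> 0"
  proof -
    have "(\<lambda>k. lam *\<^sub>R (x3 k - x1 k)) \<longlonglongrightarrow> lam *\<^sub>R 0" by (intro tendsto_intros A1)
    then show ?thesis using upd1 by simp
  qed
  have Z2: "(\<lambda>k. z2 (Suc k) - z2 k) \<longlonglongrightarrow> 0"
  proof -
    have "(\<lambda>k. lam *\<^sub>R (x3 k - x2 k)) \<longlonglongrightarrow> lam *\<^sub>R 0" by (intro tendsto_intros A2)
    then show ?thesis using upd2 by simp
  qed
  have X3: "(\<lambda>k. x3 (Suc k) - x3 k) \<longlonglongrightarrow> 0"
  proof -
    have "(\<lambda>k. (x3 (Suc k) - x1 (Suc k)) + (x1 (Suc k) - x1 k) - (x3 k - x1 k)) \<longlonglongrightarrow> 0 + 0 - 0"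
      by (intro tendsto_intros LIMSEQ_Suc[OF A1] D1 A1)
    then show ?thesis by (simp add: algebra_simps)
  qed
  have ex_bound: "\<exists>B. \<forall>k. norm (g (x k)) \<le> B" if lip: "L-lipschitz_on UNIV g" and bx: "bounded (range x)" and Lp: "0 < L"
    for g :: "'a \<Rightarrow> 'a" and x :: "nat \<Rightarrow> 'a" and L
  proof -
    obtain B where B: "\<And>k. norm (x k) \<le> B" using bx unfolding bounded_iff by auto
    have "norm (g (x k)) \<le> norm (g 0) + L * B" for k
    proof -
      have "norm (g (x k) - g 0) \<le> L * norm (x k - 0)" by (rule lipschitz_on_normD[OF lip]) auto
      moreover have "L * norm (x k) \<le> L * B" using B[of k] Lp by (intro mult_left_mono) auto
      moreover have "norm (g (x k)) - norm (g 0) \<le> norm (g (x k) - g 0)" by (rule norm_triangle_ineq2)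
      ultimately show ?thesis by simp
    qed
    then show ?thesis by blast
  qed
  have contg1: "isCont g1 y" for y
    using lipschitz_on_continuous_on[OF lip1] continuous_on_eq_continuous_at[of UNIV g1] by auto
  have contg2: "isCont g2 y" for y
    using lipschitz_on_continuous_on[OF lip2] continuous_on_eq_continuous_at[of UNIV g2] by auto
  have contf1: "isCont f1 y" for y using has_derivative_continuous[OF grad1] .
  have contf2: "isCont f2 y" for y using has_derivative_continuous[OF grad2] .
  have decE: "decseq E"
  proof (rule decseq_SucI)
    fix k
    have "0 \<le> 2 * lam * \<gamma> * (E k - E (Suc k))" using Snn[of k] dec[of k] unfolding S_def by linarith
    moreover have p: "0 < 2 * lam * \<gamma>" using lam0 gpos by simp
    moreover have "E k - E (Suc k) = (2 * lam * \<gamma> * (E k - E (Suc k))) / (2 * lam * \<gamma>)" using lam0 gpos by simp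
    ultimately have "0 \<le> E k - E (Suc k)" by (metis divide_nonneg_pos)
    then show "E (Suc k) \<le> E k" by simp
  qed
  obtain Es where Es: "E \<longlonglongrightarrow> Es" using decseq_convergent[OF decE, of m] Elb by blast
  have E0: "E k \<le> E 0" for k using decE unfolding decseq_def by auto
  define \<Phi> where "\<Phi> k = f1 (x1 k) + f2 (x2 k) + r3 k" for k
  have cw: "u k - x3 k = \<alpha> *\<^sub>R (x1 k - x3 k) + (1 - \<alpha>) *\<^sub>R (x2 k - x3 k) - \<gamma> *\<^sub>R (g1 (x1 k) + g2 (x2 k))" for k
    unfolding u_eq by (simp add: algebra_simps)
  have cp: "((\<lambda>k. ryu_env f1 g1 f2 g2 f3 \<gamma> \<alpha> (z1 k) (z2 k)) \<longlonglongrightarrow> ereal (f1 xs) + ereal (f2 xs) + f3 xs)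
          \<and> ((\<lambda>k. ereal (f1 (x1 k)) + ereal (f2 (x2 k)) + f3 (x3 k)) \<longlonglongrightarrow> ereal (f1 xs) + ereal (f2 xs) + f3 xs)
          \<and> - (g1 xs + g2 xs) \<in> limiting_subdiff f3 xs"
    if xs: "xs \<in> cluster_pts x3" and bx1: "bounded (range x1)" and bx2: "bounded (range x2)" for xs
  proof -
    obtain r where r: "strict_mono r" and X3r: "(\<lambda>j. x3 (r j)) \<longlonglongrightarrow> xs"
      using xs unfolding cluster_pts_def by (auto simp: o_def)
    have A1r: "(\<lambda>j. x3 (r j) - x1 (r j)) \<longlonglongrightarrow> 0" using LIMSEQ_subseq_LIMSEQ[OF A1 r] by (simp add: o_def)
    have A2r: "(\<lambda>j. x3 (r j) - x2 (r j)) \<longlonglongrightarrow> 0" using LIMSEQ_subseq_LIMSEQ[OF A2 r] by (simp add: o_def)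
    have X1r: "(\<lambda>j. x1 (r j)) \<longlonglongrightarrow> xs"
    proof -
      have "(\<lambda>j. x3 (r j) - (x3 (r j) - x1 (r j))) \<longlonglongrightarrow> xs - 0" by (intro tendsto_intros X3r A1r)
      then show ?thesis by simp
    qed
    have X2r: "(\<lambda>j. x2 (r j)) \<longlonglongrightarrow> xs"
    proof -
      have "(\<lambda>j. x3 (r j) - (x3 (r j) - x2 (r j))) \<longlonglongrightarrow> xs - 0" by (intro tendsto_intros X3r A2r)
      then show ?thesis by simp
    qed
    have G1r: "(\<lambda>j. g1 (x1 (r j))) \<longlonglongrightarrow> g1 xs" by (rule isCont_tendsto_compose[OF contg1 X1r])
    have G2r: "(\<lambda>j. g2 (x2 (r j))) \<longlonglongrightarrow> g2 xs" by (rule isCont_tendsto_compose[OF contg2 X2r])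
    define W where "W = - \<gamma> *\<^sub>R (g1 xs + g2 xs)"
    have Wr: "(\<lambda>j. u (r j) - x3 (r j)) \<longlonglongrightarrow> W"
    proof -
      have "(\<lambda>j. \<alpha> *\<^sub>R (x1 (r j) - x3 (r j)) + (1 - \<alpha>) *\<^sub>R (x2 (r j) - x3 (r j)) - \<gamma> *\<^sub>R (g1 (x1 (r j)) + g2 (x2 (r j))))
          \<longlonglongrightarrow> \<alpha> *\<^sub>R (xs - xs) + (1 - \<alpha>) *\<^sub>R (xs - xs) - \<gamma> *\<^sub>R (g1 xs + g2 xs)"
        by (intro tendsto_intros X1r X2r X3r G1r G2r)
      then show ?thesis unfolding cw W_def by simp
    qed
    define \<delta> where "\<delta> j = ((norm ((xs - x3 (r j)) - (u (r j) - x3 (r j))))\<^sup>2 - (norm (- (u (r j) - x3 (r j))))\<^sup>2) / (2 * \<gamma>)" for j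
    have \<delta>0: "\<delta> \<longlonglongrightarrow> 0"
    proof -
      have "\<delta> \<longlonglongrightarrow> ((norm ((xs - xs) - W))\<^sup>2 - (norm (- W))\<^sup>2) / (2 * \<gamma>)"
        unfolding \<delta>_def using gpos by (intro tendsto_intros X3r Wr) auto
      then show ?thesis by simp
    qed
    have prox_ineq: "f3 (x3 (r j)) + ereal ((norm (x3 (r j) - u (r j)))\<^sup>2 / (2 * \<gamma>)) \<le> f3 xs + ereal ((norm (xs - u (r j)))\<^sup>2 / (2 * \<gamma>))" for j
      using it3[of "r j"] unfolding prox_set_def u_def by auto
    have ub: "r3 k \<le> E 0 - f1 (x3 k) - f2 (x3 k)" for k
      using QLBk[of "x3 k" k] E0[of k] unfolding E_def by linarith
    define H where "H = E 0 - f1 xs - f2 xs"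
    have Hr: "(\<lambda>j. E 0 - f1 (x3 (r j)) - f2 (x3 (r j))) \<longlonglongrightarrow> H"
      unfolding H_def by (intro tendsto_intros isCont_tendsto_compose[OF contf1 X3r] isCont_tendsto_compose[OF contf2 X3r])
    have notinf: "f3 xs \<noteq> \<infinity>"
    proof
      assume inf: "f3 xs = \<infinity>"
      have ev1: "eventually (\<lambda>j. ereal (H + 1) < f3 (x3 (r j))) sequentially"
        by (rule lsc_seq[OF lsc3 X3r]) (simp add: inf)
      have ev2: "eventually (\<lambda>j. E 0 - f1 (x3 (r j)) - f2 (x3 (r j)) < H + 1) sequentially"
        by (rule order_tendstoD(2)[OF Hr]) simp
      have "eventually (\<lambda>j. False) sequentially"
      proof (rule eventually_mono[OF eventually_conj[OF ev1 ev2]])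
        fix j assume h: "ereal (H + 1) < f3 (x3 (r j)) \<and> E 0 - f1 (x3 (r j)) - f2 (x3 (r j)) < H + 1"
        then have "H + 1 < r3 (r j)" using r3[of "r j"] by simp
        then show False using h ub[of "r j"] by linarith
      qed
      then show False by simp
    qed
    moreover have "f3 xs \<noteq> -\<infinity>" using proper3 unfolding proper_fun_def by auto
    ultimately obtain c3 where c3: "f3 xs = ereal c3" by (cases "f3 xs") auto
    have upper: "r3 (r j) \<le> c3 + \<delta> j" for j
    proof -
      have a: "r3 (r j) + (norm (x3 (r j) - u (r j)))\<^sup>2 / (2 * \<gamma>) \<le> c3 + (norm (xs - u (r j)))\<^sup>2 / (2 * \<gamma>)"
        using prox_ineq[of j] c3 r3[of "r j"] by simp
      have e1: "xs - u (r j) = (xs - x3 (r j)) - (u (r j) - x3 (r j))" by simp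
      have e2: "norm (x3 (r j) - u (r j)) = norm (- (u (r j) - x3 (r j)))" by (simp add: norm_minus_commute)
      have "\<delta> j = (norm (xs - u (r j)))\<^sup>2 / (2 * \<gamma>) - (norm (x3 (r j) - u (r j)))\<^sup>2 / (2 * \<gamma>)"
        unfolding \<delta>_def e2 e1[symmetric] by (rule diff_divide_distrib)
      then show ?thesis using a by linarith
    qed
    have R3r: "(\<lambda>j. r3 (r j)) \<longlonglongrightarrow> c3"
    proof (rule order_tendstoI)
      fix a assume a: "a < c3"
      have "eventually (\<lambda>j. ereal a < f3 (x3 (r j))) sequentially"
        by (rule lsc_seq[OF lsc3 X3r]) (simp add: c3 a)
      then show "eventually (\<lambda>j. a < r3 (r j)) sequentially"
        by eventually_elim (simp add: r3)
    next
      fix a assume a: "c3 < a"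
      have "(\<lambda>j. c3 + \<delta> j) \<longlonglongrightarrow> c3 + 0" by (intro tendsto_intros \<delta>0)
      then have "eventually (\<lambda>j. c3 + \<delta> j < a) sequentially" using a by (intro order_tendstoD(2)) auto
      then show "eventually (\<lambda>j. r3 (r j) < a) sequentially"
      proof (rule eventually_mono)
        fix j assume "c3 + \<delta> j < a"
        then show "r3 (r j) < a" using upper[of j] by linarith
      qed
    qed
    define \<phi>s where "\<phi>s = f1 xs + f2 xs + c3"
    have Phir: "(\<lambda>j. \<Phi> (r j)) \<longlonglongrightarrow> \<phi>s"
      unfolding \<Phi>_def \<phi>s_def
      by (intro tendsto_intros isCont_tendsto_compose[OF contf1 X1r] isCont_tendsto_compose[OF contf2 X2r] R3r)
    obtain K1 where K1: "\<And>k. norm (g1 (x1 k)) \<le> K1" using ex_bound[OF lip1 bx1 L1] by auto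
    obtain K2 where K2: "\<And>k. norm (g2 (x2 k)) \<le> K2" using ex_bound[OF lip2 bx2 L2] by auto
    have EPhi_eq: "E k - \<Phi> k = (x3 k - x1 k) \<bullet> g1 (x1 k) + (norm (x3 k - x1 k))\<^sup>2 / (2 * (\<gamma> / \<alpha>))
        + (x3 k - x2 k) \<bullet> g2 (x2 k) + (norm (x3 k - x2 k))\<^sup>2 / (2 * (\<gamma> / (1 - \<alpha>)))" for k
      unfolding E_def \<Phi>_def Q_def by simp
    have T1: "(\<lambda>k. (x3 k - x1 k) \<bullet> g1 (x1 k)) \<longlonglongrightarrow> 0"
    proof (rule tendsto_0_le[OF A1, where K = K1])
      show "\<forall>\<^sub>F k in sequentially. norm ((x3 k - x1 k) \<bullet> g1 (x1 k)) \<le> norm (x3 k - x1 k) * K1"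
      proof (rule always_eventually, rule allI)
        fix k
        have "norm ((x3 k - x1 k) \<bullet> g1 (x1 k)) \<le> norm (x3 k - x1 k) * norm (g1 (x1 k))"
          using Cauchy_Schwarz_ineq2 by simp
        also have "\<dots> \<le> norm (x3 k - x1 k) * K1" using K1[of k] by (intro mult_left_mono) auto
        finally show "norm ((x3 k - x1 k) \<bullet> g1 (x1 k)) \<le> norm (x3 k - x1 k) * K1" .
      qed
    qed
    have T2: "(\<lambda>k. (x3 k - x2 k) \<bullet> g2 (x2 k)) \<longlonglongrightarrow> 0"
    proof (rule tendsto_0_le[OF A2, where K = K2])
      show "\<forall>\<^sub>F k in sequentially. norm ((x3 k - x2 k) \<bullet> g2 (x2 k)) \<le> norm (x3 k - x2 k) * K2"
      proof (rule always_eventually, rule allI)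
        fix k
        have "norm ((x3 k - x2 k) \<bullet> g2 (x2 k)) \<le> norm (x3 k - x2 k) * norm (g2 (x2 k))"
          using Cauchy_Schwarz_ineq2 by simp
        also have "\<dots> \<le> norm (x3 k - x2 k) * K2" using K2[of k] by (intro mult_left_mono) auto
        finally show "norm ((x3 k - x2 k) \<bullet> g2 (x2 k)) \<le> norm (x3 k - x2 k) * K2" .
      qed
    qed
    have EPhi: "(\<lambda>k. E k - \<Phi> k) \<longlonglongrightarrow> 0"
    proof -
      have "(\<lambda>k. (x3 k - x1 k) \<bullet> g1 (x1 k) + (norm (x3 k - x1 k))\<^sup>2 / (2 * (\<gamma> / \<alpha>))
        + (x3 k - x2 k) \<bullet> g2 (x2 k) + (norm (x3 k - x2 k))\<^sup>2 / (2 * (\<gamma> / (1 - \<alpha>))))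
        \<longlonglongrightarrow> 0 + (norm (0::'a))\<^sup>2 / (2 * (\<gamma> / \<alpha>)) + 0 + (norm (0::'a))\<^sup>2 / (2 * (\<gamma> / (1 - \<alpha>)))"
        using gpos al0 al1 by (intro tendsto_intros T1 T2 A1 A2) auto
      then show ?thesis unfolding EPhi_eq by simp
    qed
    have Er: "(\<lambda>j. E (r j)) \<longlonglongrightarrow> \<phi>s"
    proof -
      have "(\<lambda>j. \<Phi> (r j) + (E (r j) - \<Phi> (r j))) \<longlonglongrightarrow> \<phi>s + 0"
        using Phir LIMSEQ_subseq_LIMSEQ[OF EPhi r] by (intro tendsto_intros) (auto simp: o_def)
      then show ?thesis by simp
    qed
    have "Es = \<phi>s"
      using LIMSEQ_unique[OF LIMSEQ_subseq_LIMSEQ[OF Es r] ] Er by (simp add: o_def)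
    then have Elim: "E \<longlonglongrightarrow> \<phi>s" using Es by simp
    have Philim: "\<Phi> \<longlonglongrightarrow> \<phi>s"
    proof -
      have "(\<lambda>k. E k - (E k - \<Phi> k)) \<longlonglongrightarrow> \<phi>s - 0" by (intro tendsto_intros Elim EPhi)
      then show ?thesis by simp
    qed
    have tgt: "ereal (f1 xs) + ereal (f2 xs) + f3 xs = ereal \<phi>s" unfolding \<phi>s_def c3 by simp
    have c1: "(\<lambda>k. ryu_env f1 g1 f2 g2 f3 \<gamma> \<alpha> (z1 k) (z2 k)) \<longlonglongrightarrow> ereal (f1 xs) + ereal (f2 xs) + f3 xs"
      unfolding envE tgt by (rule tendsto_ereal[OF Elim])
    have c2: "(\<lambda>k. ereal (f1 (x1 k)) + ereal (f2 (x2 k)) + f3 (x3 k)) \<longlonglongrightarrow> ereal (f1 xs) + ereal (f2 xs) + f3 xs"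
    proof -
      have "(\<lambda>k. ereal (f1 (x1 k)) + ereal (f2 (x2 k)) + f3 (x3 k)) = (\<lambda>k. ereal (\<Phi> k))"
        unfolding \<Phi>_def r3 by simp
      then show ?thesis unfolding tgt using tendsto_ereal[OF Philim] by simp
    qed
    have c3': "- (g1 xs + g2 xs) \<in> limiting_subdiff f3 xs"
      unfolding limiting_subdiff_def
    proof (intro CollectI exI conjI allI)
      show "(\<lambda>j. x3 (r j)) \<longlonglongrightarrow> xs" by (rule X3r)
      show "(\<lambda>j. f3 (x3 (r j))) \<longlonglongrightarrow> f3 xs" unfolding r3 c3 by (rule tendsto_ereal[OF R3r])
      have "(\<lambda>j. (1 / \<gamma>) *\<^sub>R (u (r j) - x3 (r j))) \<longlonglongrightarrow> (1 / \<gamma>) *\<^sub>R W" by (intro tendsto_intros Wr)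
      then show "(\<lambda>j. (1 / \<gamma>) *\<^sub>R (u (r j) - x3 (r j))) \<longlonglongrightarrow> - (g1 xs + g2 xs)"
        unfolding W_def using gpos by simp
      fix j
      show "(1 / \<gamma>) *\<^sub>R (u (r j) - x3 (r j)) \<in> frechet_subdiff f3 (x3 (r j))"
        unfolding u_def by (rule frechet_prox[OF proper3 it3 gpos])
    qed
    show ?thesis using c1 c2 c3' by blast
  qed
  have m13: "(\<lambda>k. x1 k - x3 k) \<longlonglongrightarrow> 0" using tendsto_minus[OF A1] by (simp add: algebra_simps)
  have m23: "(\<lambda>k. x2 k - x3 k) \<longlonglongrightarrow> 0" using tendsto_minus[OF A2] by (simp add: algebra_simps)
  show ?thesis
  proof (intro conjI impI)
    show "(\<lambda>k. x1 (Suc k) - x1 k) \<longlonglongrightarrow> 0" by (rule D1)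
    show "(\<lambda>k. x2 (Suc k) - x2 k) \<longlonglongrightarrow> 0" by (rule D2)
    show "(\<lambda>k. x3 (Suc k) - x3 k) \<longlonglongrightarrow> 0" by (rule X3)
    show "(\<lambda>k. z1 (Suc k) - z1 k) \<longlonglongrightarrow> 0" by (rule Z1)
    show "(\<lambda>k. z2 (Suc k) - z2 k) \<longlonglongrightarrow> 0" by (rule Z2)
    show "(\<lambda>k. x3 k - x1 k) \<longlonglongrightarrow> 0" by (rule A1)
    show "(\<lambda>k. x3 k - x2 k) \<longlonglongrightarrow> 0" by (rule A2)
    show "cluster_pts x1 = cluster_pts x3" by (rule cluster_eq[OF m13])
    show "cluster_pts x2 = cluster_pts x3" by (rule cluster_eq[OF m23])
    assume bnd: "bounded (range x1) \<and> bounded (range x2) \<and> bounded (range x3) \<and> bounded (range z1) \<and> bounded (range z2)"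
    show "\<forall>xs\<in>cluster_pts x3. ((\<lambda>k. ryu_env f1 g1 f2 g2 f3 \<gamma> \<alpha> (z1 k) (z2 k)) \<longlonglongrightarrow> ereal (f1 xs) + ereal (f2 xs) + f3 xs)
          \<and> ((\<lambda>k. ereal (f1 (x1 k)) + ereal (f2 (x2 k)) + f3 (x3 k)) \<longlonglongrightarrow> ereal (f1 xs) + ereal (f2 xs) + f3 xs)"
      using cp bnd by blast
    show "\<forall>xs\<in>cluster_pts x3. - (g1 xs + g2 xs) \<in> limiting_subdiff f3 xs"
      using cp bnd by blast
  qed
qed

end
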